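(* In $\mathcal{H}eis_k$, with $\tau,c',d',x'$ as in the context, the following relations hold: $\tau\circ(x'\otimes 1_\uparrow)-(1_\uparrow\otimes x')\circ\tau=c'\circ d'$, $\quad\tau\circ(1_\downarrow\otimes x)-(x\otimes 1_\downarrow)\circ\tau=c'\circ d'$, $d'\circ(1_\downarrow\otimes x)=d'\circ(x'\otimes 1_\uparrow)$, $\quad(x\otimes 1_\downarrow)\circ c'=(1_\uparrow\otimes x')\circ c'$.
   Context: Fix a commutative ring $\Bbbk$ and an integer $k$. In a strict monoidal category write $\mathbf 1$ for the unit object, $1_X$ for the identity, $a\circ b$ for composition, $a\otimes b$ for tensor product, $x^n$ for the $n$-fold composite. The Heisenberg category $\mathcal{H}eis_k$ is the strict $\Bbbk$-linear monoidal category generated by objects $\uparrow,\downarrow$ and morphisms $x:\uparrow\to\uparrow$, $s:\uparrow\otimes\uparrow\to\uparrow\otimes\uparrow$, $c:\mathbf 1\to\downarrow\otimes\uparrow$, $d:\uparrow\otimes\downarrow\to\mathbf 1$, subject to the following relations, where $t:=(1_\downarrow\otimes 1_\uparrow\otimes d)\circ(1_\downarrow\otimes s\otimes 1_\downarrow)\circ(c\otimes 1_\uparrow\otimes 1_\downarrow):\uparrow\otimes\downarrow\to\downarrow\otimes\uparrow$: (H) $s\circ s=1_{\uparrow\otimes\uparrow}$; $(s\otimes 1_\uparrow)\circ(1_\uparrow\otimes s)\circ(s\otimes 1_\uparrow)=(1_\uparrow\otimes s)\circ(s\otimes 1_\uparrow)\circ(1_\uparrow\otimes s)$; $(x\otimes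 1_\uparrow)\circ s-s\circ(1_\uparrow\otimes x)=1_{\uparrow\otimes\uparrow}$. (A) $(d\otimes 1_\uparrow)\circ(1_\uparrow\otimes c)=1_\uparrow$ and $(1_\downarrow\otimes d)\circ(c\otimes 1_\downarrow)=1_\downarrow$. (I) If $k\ge0$, the morphism $\uparrow\otimes\downarrow\to(\downarrow\otimes\uparrow)\oplus\mathbf 1^{\oplus k}$ with components $t$ and $d\circ(x^r\otimes 1_\downarrow)$, $r=0,\dots,k-1$, is an isomorphism in the additive envelope; if $k<0$, the morphism $(\uparrow\otimes\downarrow)\oplus\mathbf 1^{\oplus(-k)}\to\downarrow\otimes\uparrow$ with components $t$ and $(1_\downarrow\otimes x^r)\circ c$, $r=0,\dots,-k-1$, is an isomorphism in the additive envelope (formally, the entries of a two-sided inverse matrix are adjoined as generators). If $k\ge0$ the inverse in (I) has components $\tau:\downarrow\otimes\uparrow\to\uparrow\otimes\downarrow$ and $e_r:\mathbf 1\to\uparrow\otimes\downarrow$ ($0\le r<k$); if $k<0$ it has components $\tau:\downarrow\otimes\uparrow\to\uparrow\otimes\downarrow$ and $f_r:\downarrow\otimes\uparrow\to\mathbf 1$ ($0\le r<-k$). Set $c':=-e_{k-1}$ if $k>0$, $c':=\tau\circ(1_\downarrow\otimes x^{-k})\circ c$ if $k\le0$; $d':=d\circ(x^k\otimes1_\downarrow)\circ\tau$ if $k\ge0$, $d':=f_{-k-1}$ if $k<0$. Let $x':=(1_\downarrow\otimes d)\circ(1_\downarrow\otimes x\otimes 1_\downarrow)\circ(c\otimes 1_\downarrow):\downarrow\to\downarrow$.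 *)

theory Defs
  imports Main
begin

text \<open>A strict \<Bbbk>-linear monoidal category, encoded concretely: objects of type 'o,
  morphisms of type 'm (each morphism lies in at most one hom-set), scalars of type 'k.
  comp g f is g composed after f.\<close>

record ('o,'m,'k) slmcat =
  hom :: "'o \<Rightarrow> 'o \<Rightarrow> 'm set"
  comp :: "'m \<Rightarrow> 'm \<Rightarrow> 'm"
  tens :: "'m \<Rightarrow> 'm \<Rightarrow> 'm"
  ident :: "'o \<Rightarrow> 'm"
  otens :: "'o \<Rightarrow> 'o \<Rightarrow> 'o"
  ounit :: "'o"
  madd :: "'m \<Rightarrow> 'm \<Rightarrow> 'm"
  mzero :: "'o \<Rightarrow> 'o \<Rightarrow> 'm"
  smul :: "'k \<Rightarrow> 'm \<Rightarrow> 'm"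

definition slm_cat :: "('o,'m,'k::comm_ring_1) slmcat \<Rightarrow> bool" where
  "slm_cat C \<longleftrightarrow>
    \<comment> \<open>hom-sets are disjoint\<close>
    (\<forall>A B A' B' f. f \<in> hom C A B \<longrightarrow> f \<in> hom C A' B' \<longrightarrow> A = A' \<and> B = B') \<and>
    \<comment> \<open>category\<close>
    (\<forall>A. ident C A \<in> hom C A A) \<and>
    (\<forall>A B D f g. f \<in> hom C A B \<longrightarrow> g \<in> hom C B D \<longrightarrow> comp C g f \<in> hom C A D) \<and>
    (\<forall>A B D E f g h. f \<in> hom C A B \<longrightarrow> g \<in> hom C B D \<longrightarrow> h \<in> hom C D E \<longrightarrow>
        comp C (comp C h g) f = comp C h (comp C g f)) \<and>
    (\<forall>A B f. f \<in> hom C A B \<longrightarrow> comp C (ident C B) f = f \<and> comp C f (ident C A) = f) \<and>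
    \<comment> \<open>each hom-set is a module over 'k\<close>
    (\<forall>A B. mzero C A B \<in> hom C A B) \<and>
    (\<forall>A B f g. f \<in> hom C A B \<longrightarrow> g \<in> hom C A B \<longrightarrow> madd C f g \<in> hom C A B) \<and>
    (\<forall>A B a f. f \<in> hom C A B \<longrightarrow> smul C a f \<in> hom C A B) \<and>
    (\<forall>A B f g h. f \<in> hom C A B \<longrightarrow> g \<in> hom C A B \<longrightarrow> h \<in> hom C A B \<longrightarrow>
        madd C (madd C f g) h = madd C f (madd C g h)) \<and>
    (\<forall>A B f g. f \<in> hom C A B \<longrightarrow> g \<in> hom C A B \<longrightarrow> madd C f g = madd C g f) \<and>
    (\<forall>A B f. f \<in> hom C A B \<longrightarrow> madd C f (mzero C A B) = f) \<and>
    (\<forall>A B f. f \<in> hom C A B \<longrightarrow> madd C f (smul C (-1) f) = mzero C A B) \<and>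
    (\<forall>A B f g a. f \<in> hom C A B \<longrightarrow> g \<in> hom C A B \<longrightarrow>
        smul C a (madd C f g) = madd C (smul C a f) (smul C a g)) \<and>
    (\<forall>A B f a b. f \<in> hom C A B \<longrightarrow> smul C (a + b) f = madd C (smul C a f) (smul C b f)) \<and>
    (\<forall>A B f a b. f \<in> hom C A B \<longrightarrow> smul C (a * b) f = smul C a (smul C b f)) \<and>
    (\<forall>A B f. f \<in> hom C A B \<longrightarrow> smul C 1 f = f) \<and>
    \<comment> \<open>composition is bilinear\<close>
    (\<forall>A B D f g g'. f \<in> hom C A B \<longrightarrow> g \<in> hom C B D \<longrightarrow> g' \<in> hom C B D \<longrightarrow>
        comp C (madd C g g') f = madd C (comp C g f) (comp C g' f)) \<and>
    (\<forall>A B D f f' g. f \<in> hom C A B \<longrightarrow> f' \<in> hom C A B \<longrightarrow> g \<in> hom C B D \<longrightarrow>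
        comp C g (madd C f f') = madd C (comp C g f) (comp C g f')) \<and>
    (\<forall>A B D f g a. f \<in> hom C A B \<longrightarrow> g \<in> hom C B D \<longrightarrow>
        comp C (smul C a g) f = smul C a (comp C g f) \<and> comp C g (smul C a f) = smul C a (comp C g f)) \<and>
    \<comment> \<open>strict monoidal structure on objects\<close>
    (\<forall>A B D. otens C (otens C A B) D = otens C A (otens C B D)) \<and>
    (\<forall>A. otens C (ounit C) A = A \<and> otens C A (ounit C) = A) \<and>
    \<comment> \<open>tensor product of morphisms\<close>
    (\<forall>A B A' B' f g. f \<in> hom C A B \<longrightarrow> g \<in> hom C A' B' \<longrightarrow>
        tens C f g \<in> hom C (otens C A A') (otens C B B')) \<and>
    (\<forall>A B A' B' A'' B'' f g h. f \<in> hom C A B \<longrightarrow> g \<in> hom C A' B' \<longrightarrow> h \<in> hom C A'' B'' \<longrightarrow>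
        tens C (tens C f g) h = tens C f (tens C g h)) \<and>
    (\<forall>A B f. f \<in> hom C A B \<longrightarrow>
        tens C (ident C (ounit C)) f = f \<and> tens C f (ident C (ounit C)) = f) \<and>
    (\<forall>A B. tens C (ident C A) (ident C B) = ident C (otens C A B)) \<and>
    (\<forall>A B D A' B' D' f g f' g'. f \<in> hom C A B \<longrightarrow> g \<in> hom C B D \<longrightarrow>
        f' \<in> hom C A' B' \<longrightarrow> g' \<in> hom C B' D' \<longrightarrow>
        tens C (comp C g f) (comp C g' f') = comp C (tens C g g') (tens C f f')) \<and>
    \<comment> \<open>tensor product is bilinear\<close>
    (\<forall>A B A' B' f f' g. f \<in> hom C A B \<longrightarrow> f' \<in> hom C A B \<longrightarrow> g \<in> hom C A' B' \<longrightarrow>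
        tens C (madd C f f') g = madd C (tens C f g) (tens C f' g) \<and>
        tens C g (madd C f f') = madd C (tens C g f) (tens C g f')) \<and>
    (\<forall>A B A' B' f g a. f \<in> hom C A B \<longrightarrow> g \<in> hom C A' B' \<longrightarrow>
        tens C (smul C a f) g = smul C a (tens C f g) \<and> tens C f (smul C a g) = smul C a (tens C f g))"

definition msub :: "('o,'m,'k::comm_ring_1) slmcat \<Rightarrow> 'm \<Rightarrow> 'm \<Rightarrow> 'm" where
  "msub C f g = madd C f (smul C (-1) g)"

primrec mpow :: "('o,'m,'k) slmcat \<Rightarrow> 'o \<Rightarrow> 'm \<Rightarrow> nat \<Rightarrow> 'm" where
  "mpow C A f 0 = ident C A"
| "mpow C A f (Suc n) = comp C f (mpow C A f n)"

primrec msum :: "('o,'m,'k) slmcat \<Rightarrow> 'o \<Rightarrow> 'o \<Rightarrow> (nat \<Rightarrow> 'm) \<Rightarrow> nat \<Rightarrow> 'm" where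
  "msum C A B g 0 = mzero C A B"
| "msum C A B g (Suc n) = madd C (msum C A B g n) (g n)"

definition heis_t :: "('o,'m,'k) slmcat \<Rightarrow> 'o \<Rightarrow> 'o \<Rightarrow> 'm \<Rightarrow> 'm \<Rightarrow> 'm \<Rightarrow> 'm" where
  "heis_t C up dn s c d =
     comp C (tens C (ident C dn) (tens C (ident C up) d))
       (comp C (tens C (ident C dn) (tens C s (ident C dn)))
          (tens C c (tens C (ident C up) (ident C dn))))"

text \<open>The data (up, dn, x, s, c, d, tau, e, f) satisfies the defining relations of Heis_k
  (level lev) in C; e is used when lev >= 0, f when lev < 0.\<close>
definition heis_rels ::
  "('o,'m,'k::comm_ring_1) slmcat \<Rightarrow> int \<Rightarrow> 'o \<Rightarrow> 'o \<Rightarrow> 'm \<Rightarrow> 'm \<Rightarrow> 'm \<Rightarrow> 'm \<Rightarrow> 'm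
     \<Rightarrow> (nat \<Rightarrow> 'm) \<Rightarrow> (nat \<Rightarrow> 'm) \<Rightarrow> bool" where
  "heis_rels C lev up dn x s c d tau e f \<longleftrightarrow>
    (let U = ounit C; I = ident C; uu = otens C up up; ud = otens C up dn; du = otens C dn up;
         t = heis_t C up dn s c d in
     \<comment> \<open>typing of generators\<close>
     x \<in> hom C up up \<and> s \<in> hom C uu uu \<and> c \<in> hom C U du \<and> d \<in> hom C ud U \<and>
     tau \<in> hom C du ud \<and>
     (lev \<ge> 0 \<longrightarrow> (\<forall>r < nat lev. e r \<in> hom C U ud)) \<and>
     (lev < 0 \<longrightarrow> (\<forall>r < nat (- lev). f r \<in> hom C du U)) \<and>
     \<comment> \<open>(H)\<close>
     comp C s s = I uu \<and>
     comp C (tens C s (I up)) (comp C (tens C (I up) s) (tens C s (I up))) =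
       comp C (tens C (I up) s) (comp C (tens C s (I up)) (tens C (I up) s)) \<and>
     msub C (comp C (tens C x (I up)) s) (comp C s (tens C (I up) x)) = I uu \<and>
     \<comment> \<open>(A)\<close>
     comp C (tens C d (I up)) (tens C (I up) c) = I up \<and>
     comp C (tens C (I dn) d) (tens C c (I dn)) = I dn \<and>
     \<comment> \<open>(I), k >= 0: (t, d(x^r ox 1)) has two-sided inverse (tau, e_r)\<close>
     (lev \<ge> 0 \<longrightarrow>
       (let K = nat lev; dx = (\<lambda>r. comp C d (tens C (mpow C up x r) (I dn))) in
        madd C (comp C tau t) (msum C ud ud (\<lambda>r. comp C (e r) (dx r)) K) = I ud \<and>
        comp C t tau = I du \<and>
        (\<forall>r < K. comp C t (e r) = mzero C U du) \<and>
        (\<forall>r < K. comp C (dx r) tau = mzero C du U) \<and>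
        (\<forall>r < K. \<forall>q < K. comp C (dx r) (e q) = (if r = q then I U else mzero C U U)))) \<and>
     \<comment> \<open>(I), k < 0: (t, (1 ox x^r)c) has two-sided inverse (tau, f_r)\<close>
     (lev < 0 \<longrightarrow>
       (let K = nat (- lev); cx = (\<lambda>r. comp C (tens C (I dn) (mpow C up x r)) c) in
        madd C (comp C t tau) (msum C du du (\<lambda>r. comp C (cx r) (f r)) K) = I du \<and>
        comp C tau t = I ud \<and>
        (\<forall>r < K. comp C tau (cx r) = mzero C U ud) \<and>
        (\<forall>r < K. comp C (f r) t = mzero C ud U) \<and>
        (\<forall>r < K. \<forall>q < K. comp C (f r) (cx q) = (if r = q then I U else mzero C U U)))))"

definition heis_c' :: "('o,'m,'k::comm_ring_1) slmcat \<Rightarrow> int \<Rightarrow> 'o \<Rightarrow> 'o \<Rightarrow> 'm \<Rightarrow> 'm \<Rightarrow> 'm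
     \<Rightarrow> (nat \<Rightarrow> 'm) \<Rightarrow> 'm" where
  "heis_c' C lev up dn x c tau e =
     (if lev > 0 then smul C (-1) (e (nat lev - 1))
      else comp C tau (comp C (tens C (ident C dn) (mpow C up x (nat (- lev)))) c))"

definition heis_d' :: "('o,'m,'k) slmcat \<Rightarrow> int \<Rightarrow> 'o \<Rightarrow> 'o \<Rightarrow> 'm \<Rightarrow> 'm \<Rightarrow> 'm
     \<Rightarrow> (nat \<Rightarrow> 'm) \<Rightarrow> 'm" where
  "heis_d' C lev up dn x d tau f =
     (if lev \<ge> 0 then comp C d (comp C (tens C (mpow C up x (nat lev)) (ident C dn)) tau)
      else f (nat (- lev) - 1))"

definition heis_x' :: "('o,'m,'k) slmcat \<Rightarrow> 'o \<Rightarrow> 'm \<Rightarrow> 'm \<Rightarrow> 'm \<Rightarrow> 'm" where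
  "heis_x' C dn x c d =
     comp C (tens C (ident C dn) d)
       (comp C (tens C (ident C dn) (tens C x (ident C dn))) (tens C c (ident C dn)))"

end

theory Submission
  imports Defs
begin

locale slm =
  fixes C :: "('o,'m,'k::comm_ring_1) slmcat"
  assumes slm: "slm_cat C"
begin

abbreviation cp (infixr "\<cdot>" 55) where "g \<cdot> f \<equiv> comp C g f"
abbreviation tn (infixr "\<otimes>" 65) where "f \<otimes> g \<equiv> tens C f g"
abbreviation ot (infixr "\<odot>" 70) where "A \<odot> B \<equiv> otens C A B"
abbreviation I where "I A \<equiv> ident C A"
abbreviation U where "U \<equiv> ounit C"
abbreviation ad (infixl "\<boxplus>" 52) where "f \<boxplus> g \<equiv> madd C f g"
abbreviation ng where "ng f \<equiv> smul C (-1) f"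
abbreviation Z where "Z A B \<equiv> mzero C A B"

definition wt where "wt f \<longleftrightarrow> (\<exists>A B. f \<in> hom C A B)"
definition dom where "dom f = (THE A. \<exists>B. f \<in> hom C A B)"
definition cod where "cod f = (THE B. \<exists>A. f \<in> hom C A B)"

lemmas AX = slm[unfolded slm_cat_def]
lemmas AX1 = AX[THEN conjunct1, rule_format]
lemmas AX2 = AX[THEN conjunct2, THEN conjunct1, rule_format]
lemmas AX3 = AX[THEN conjunct2, THEN conjunct2, THEN conjunct1, rule_format]
lemmas AX4 = AX[THEN conjunct2, THEN conjunct2, THEN conjunct2, THEN conjunct1, rule_format]
lemmas AX5 = AX[THEN conjunct2, THEN conjunct2, THEN conjunct2, THEN conjunct2, THEN conjunct1, rule_format]
lemmas AX6 = AX[THEN conjunct2, THEN conjunct2, THEN conjunct2, THEN conjunct2, THEN conjunct2, THEN conjunct1, rule_format]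
lemmas AX7 = AX[THEN conjunct2, THEN conjunct2, THEN conjunct2, THEN conjunct2, THEN conjunct2, THEN conjunct2, THEN conjunct1, rule_format]
lemmas AX8 = AX[THEN conjunct2, THEN conjunct2, THEN conjunct2, THEN conjunct2, THEN conjunct2, THEN conjunct2, THEN conjunct2, THEN conjunct1, rule_format]
lemmas AX9 = AX[THEN conjunct2, THEN conjunct2, THEN conjunct2, THEN conjunct2, THEN conjunct2, THEN conjunct2, THEN conjunct2, THEN conjunct2, THEN conjunct1, rule_format]
lemmas AX10 = AX[THEN conjunct2, THEN conjunct2, THEN conjunct2, THEN conjunct2, THEN conjunct2, THEN conjunct2, THEN conjunct2, THEN conjunct2, THEN conjunct2, THEN conjunct1, rule_format]
lemmas AX11 = AX[THEN conjunct2, THEN conjunct2, THEN conjunct2, THEN conjunct2, THEN conjunct2, THEN conjunct2, THEN conjunct2, THEN conjunct2, THEN conjunct2, THEN conjunct2, THEN conjunct1, rule_format]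
lemmas AX12 = AX[THEN conjunct2, THEN conjunct2, THEN conjunct2, THEN conjunct2, THEN conjunct2, THEN conjunct2, THEN conjunct2, THEN conjunct2, THEN conjunct2, THEN conjunct2, THEN conjunct2, THEN conjunct1, rule_format]
lemmas AX13 = AX[THEN conjunct2, THEN conjunct2, THEN conjunct2, THEN conjunct2, THEN conjunct2, THEN conjunct2, THEN conjunct2, THEN conjunct2, THEN conjunct2, THEN conjunct2, THEN conjunct2, THEN conjunct2, THEN conjunct1, rule_format]
lemmas AX14 = AX[THEN conjunct2, THEN conjunct2, THEN conjunct2, THEN conjunct2, THEN conjunct2, THEN conjunct2, THEN conjunct2, THEN conjunct2, THEN conjunct2, THEN conjunct2, THEN conjunct2, THEN conjunct2, THEN conjunct2, THEN conjunct1, rule_format]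
lemmas AX15 = AX[THEN conjunct2, THEN conjunct2, THEN conjunct2, THEN conjunct2, THEN conjunct2, THEN conjunct2, THEN conjunct2, THEN conjunct2, THEN conjunct2, THEN conjunct2, THEN conjunct2, THEN conjunct2, THEN conjunct2, THEN conjunct2, THEN conjunct1, rule_format]
lemmas AX16 = AX[THEN conjunct2, THEN conjunct2, THEN conjunct2, THEN conjunct2, THEN conjunct2, THEN conjunct2, THEN conjunct2, THEN conjunct2, THEN conjunct2, THEN conjunct2, THEN conjunct2, THEN conjunct2, THEN conjunct2, THEN conjunct2, THEN conjunct2, THEN conjunct1, rule_format]
lemmas AX17 = AX[THEN conjunct2, THEN conjunct2, THEN conjunct2, THEN conjunct2, THEN conjunct2, THEN conjunct2, THEN conjunct2, THEN conjunct2, THEN conjunct2, THEN conjunct2, THEN conjunct2, THEN conjunct2, THEN conjunct2, THEN conjunct2, THEN conjunct2, THEN conjunct2, THEN conjunct1, rule_format]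
lemmas AX18 = AX[THEN conjunct2, THEN conjunct2, THEN conjunct2, THEN conjunct2, THEN conjunct2, THEN conjunct2, THEN conjunct2, THEN conjunct2, THEN conjunct2, THEN conjunct2, THEN conjunct2, THEN conjunct2, THEN conjunct2, THEN conjunct2, THEN conjunct2, THEN conjunct2, THEN conjunct2, THEN conjunct1, rule_format]
lemmas AX19 = AX[THEN conjunct2, THEN conjunct2, THEN conjunct2, THEN conjunct2, THEN conjunct2, THEN conjunct2, THEN conjunct2, THEN conjunct2, THEN conjunct2, THEN conjunct2, THEN conjunct2, THEN conjunct2, THEN conjunct2, THEN conjunct2, THEN conjunct2, THEN conjunct2, THEN conjunct2, THEN conjunct2, THEN conjunct1, rule_format]
lemmas AX20 = AX[THEN conjunct2, THEN conjunct2, THEN conjunct2, THEN conjunct2, THEN conjunct2, THEN conjunct2, THEN conjunct2, THEN conjunct2, THEN conjunct2, THEN conjunct2, THEN conjunct2, THEN conjunct2, THEN conjunct2, THEN conjunct2, THEN conjunct2, THEN conjunct2, THEN conjunct2, THEN conjunct2, THEN conjunct2, THEN conjunct1, rule_format]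
lemmas AX21 = AX[THEN conjunct2, THEN conjunct2, THEN conjunct2, THEN conjunct2, THEN conjunct2, THEN conjunct2, THEN conjunct2, THEN conjunct2, THEN conjunct2, THEN conjunct2, THEN conjunct2, THEN conjunct2, THEN conjunct2, THEN conjunct2, THEN conjunct2, THEN conjunct2, THEN conjunct2, THEN conjunct2, THEN conjunct2, THEN conjunct2, THEN conjunct1, rule_format]
lemmas AX22 = AX[THEN conjunct2, THEN conjunct2, THEN conjunct2, THEN conjunct2, THEN conjunct2, THEN conjunct2, THEN conjunct2, THEN conjunct2, THEN conjunct2, THEN conjunct2, THEN conjunct2, THEN conjunct2, THEN conjunct2, THEN conjunct2, THEN conjunct2, THEN conjunct2, THEN conjunct2, THEN conjunct2, THEN conjunct2, THEN conjunct2, THEN conjunct2, THEN conjunct1, rule_format]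
lemmas AX23 = AX[THEN conjunct2, THEN conjunct2, THEN conjunct2, THEN conjunct2, THEN conjunct2, THEN conjunct2, THEN conjunct2, THEN conjunct2, THEN conjunct2, THEN conjunct2, THEN conjunct2, THEN conjunct2, THEN conjunct2, THEN conjunct2, THEN conjunct2, THEN conjunct2, THEN conjunct2, THEN conjunct2, THEN conjunct2, THEN conjunct2, THEN conjunct2, THEN conjunct2, THEN conjunct1, rule_format]
lemmas AX24 = AX[THEN conjunct2, THEN conjunct2, THEN conjunct2, THEN conjunct2, THEN conjunct2, THEN conjunct2, THEN conjunct2, THEN conjunct2, THEN conjunct2, THEN conjunct2, THEN conjunct2, THEN conjunct2, THEN conjunct2, THEN conjunct2, THEN conjunct2, THEN conjunct2, THEN conjunct2, THEN conjunct2, THEN conjunct2, THEN conjunct2, THEN conjunct2, THEN conjunct2, THEN conjunct2, THEN conjunct1, rule_format]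
lemmas AX25 = AX[THEN conjunct2, THEN conjunct2, THEN conjunct2, THEN conjunct2, THEN conjunct2, THEN conjunct2, THEN conjunct2, THEN conjunct2, THEN conjunct2, THEN conjunct2, THEN conjunct2, THEN conjunct2, THEN conjunct2, THEN conjunct2, THEN conjunct2, THEN conjunct2, THEN conjunct2, THEN conjunct2, THEN conjunct2, THEN conjunct2, THEN conjunct2, THEN conjunct2, THEN conjunct2, THEN conjunct2, THEN conjunct1, rule_format]
lemmas AX26 = AX[THEN conjunct2, THEN conjunct2, THEN conjunct2, THEN conjunct2, THEN conjunct2, THEN conjunct2, THEN conjunct2, THEN conjunct2, THEN conjunct2, THEN conjunct2, THEN conjunct2, THEN conjunct2, THEN conjunct2, THEN conjunct2, THEN conjunct2, THEN conjunct2, THEN conjunct2, THEN conjunct2, THEN conjunct2, THEN conjunct2, THEN conjunct2, THEN conjunct2, THEN conjunct2, THEN conjunct2, THEN conjunct2, THEN conjunct1, rule_format]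
lemmas AX27 = AX[THEN conjunct2, THEN conjunct2, THEN conjunct2, THEN conjunct2, THEN conjunct2, THEN conjunct2, THEN conjunct2, THEN conjunct2, THEN conjunct2, THEN conjunct2, THEN conjunct2, THEN conjunct2, THEN conjunct2, THEN conjunct2, THEN conjunct2, THEN conjunct2, THEN conjunct2, THEN conjunct2, THEN conjunct2, THEN conjunct2, THEN conjunct2, THEN conjunct2, THEN conjunct2, THEN conjunct2, THEN conjunct2, THEN conjunct2, THEN conjunct1, rule_format]
lemmas AX28 = AX[THEN conjunct2, THEN conjunct2, THEN conjunct2, THEN conjunct2, THEN conjunct2, THEN conjunct2, THEN conjunct2, THEN conjunct2, THEN conjunct2, THEN conjunct2, THEN conjunct2, THEN conjunct2, THEN conjunct2, THEN conjunct2, THEN conjunct2, THEN conjunct2, THEN conjunct2, THEN conjunct2, THEN conjunct2, THEN conjunct2, THEN conjunct2, THEN conjunct2, THEN conjunct2, THEN conjunct2, THEN conjunct2, THEN conjunct2, THEN conjunct2, rule_format]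

lemma disj: "f \<in> hom C A B \<Longrightarrow> f \<in> hom C A' B' \<Longrightarrow> A = A' \<and> B = B'"
  using AX1 by blast

lemma homD: assumes "f \<in> hom C A B" shows "wt f" "dom f = A" "cod f = B"
proof -
  show "wt f" using assms wt_def by blast
  show "dom f = A" unfolding dom_def using assms disj by blast
  show "cod f = B" unfolding cod_def using assms disj by blast
qed

lemma wtD: "wt f \<Longrightarrow> f \<in> hom C (dom f) (cod f)"
  unfolding wt_def using homD by metis
lemma homI: "wt f \<Longrightarrow> dom f = A \<Longrightarrow> cod f = B \<Longrightarrow> f \<in> hom C A B"
  using wtD by blast

lemma ot_assoc[simp]: "(A \<odot> B) \<odot> D = A \<odot> (B \<odot> D)" using AX20 by blast
lemma ot_unit[simp]: "U \<odot> A = A" "A \<odot> U = A" using AX21 by blast+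

lemma wt_ident[simp]: "wt (I A)" "dom (I A) = A" "cod (I A) = A"
  using homD AX2 by blast+
lemma wt_zero[simp]: "wt (Z A B)" "dom (Z A B) = A" "cod (Z A B) = B"
  using homD AX6 by blast+
lemma wt_comp[simp]:
  assumes "wt f" "wt g" "dom g = cod f"
  shows "wt (g \<cdot> f)" "dom (g \<cdot> f) = dom f" "cod (g \<cdot> f) = cod g"
proof -
  have "g \<cdot> f \<in> hom C (dom f) (cod g)" using AX3 wtD assms by metis
  then show "wt (g \<cdot> f)" "dom (g \<cdot> f) = dom f" "cod (g \<cdot> f) = cod g" using homD by auto
qed
lemma wt_tens[simp]:
  assumes "wt f" "wt g"
  shows "wt (f \<otimes> g)" "dom (f \<otimes> g) = dom f \<odot> dom g" "cod (f \<otimes> g) = cod f \<odot> cod g"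
proof -
  have "f \<otimes> g \<in> hom C (dom f \<odot> dom g) (cod f \<odot> cod g)" using AX22 wtD assms by metis
  then show "wt (f \<otimes> g)" "dom (f \<otimes> g) = dom f \<odot> dom g" "cod (f \<otimes> g) = cod f \<odot> cod g"
    using homD by auto
qed
lemma wt_add[simp]:
  assumes "wt f" "wt g" "dom g = dom f" "cod g = cod f"
  shows "wt (f \<boxplus> g)" "dom (f \<boxplus> g) = dom f" "cod (f \<boxplus> g) = cod f"
proof -
  have "(f \<boxplus> g) \<in> hom C (dom f) (cod f)" using AX7 wtD assms by metis
  then show "wt (f \<boxplus> g)" "dom (f \<boxplus> g) = dom f" "cod (f \<boxplus> g) = cod f" using homD by auto
qed
lemma wt_smul[simp]:
  assumes "wt f"
  shows "wt (smul C a f)" "dom (smul C a f) = dom f" "cod (smul C a f) = cod f"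
proof -
  have "smul C a f \<in> hom C (dom f) (cod f)" using AX8 wtD assms by metis
  then show "wt (smul C a f)" "dom (smul C a f) = dom f" "cod (smul C a f) = cod f" using homD by auto
qed

lemma assoc:
  assumes "wt f" "wt g" "wt h" "dom g = cod f" "dom h = cod g"
  shows "(h \<cdot> g) \<cdot> f = h \<cdot> (g \<cdot> f)"
  using assms AX4 wtD by metis
lemma idl[simp]: "wt f \<Longrightarrow> B = cod f \<Longrightarrow> I B \<cdot> f = f"
  using AX5 wtD by metis
lemma idr[simp]: "wt f \<Longrightarrow> A = dom f \<Longrightarrow> f \<cdot> I A = f"
  using AX5 wtD by metis
lemma add_assoc: "wt f \<Longrightarrow> wt g \<Longrightarrow> wt h \<Longrightarrow> dom g = dom f \<Longrightarrow> cod g = cod f \<Longrightarrow>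
   dom h = dom f \<Longrightarrow> cod h = cod f \<Longrightarrow> (f \<boxplus> g) \<boxplus> h = f \<boxplus> (g \<boxplus> h)"
  using AX9 wtD by metis
lemma add_comm: "wt f \<Longrightarrow> wt g \<Longrightarrow> dom g = dom f \<Longrightarrow> cod g = cod f \<Longrightarrow> f \<boxplus> g = g \<boxplus> f"
  using AX10 wtD by metis
lemma add_zero[simp]: "wt f \<Longrightarrow> A = dom f \<Longrightarrow> B = cod f \<Longrightarrow> f \<boxplus> Z A B = f"
  using AX11 wtD by metis
lemma zero_add[simp]: "wt f \<Longrightarrow> A = dom f \<Longrightarrow> B = cod f \<Longrightarrow> Z A B \<boxplus> f = f"
  using add_zero add_comm by simp
lemma add_neg[simp]: "wt f \<Longrightarrow> A = dom f \<Longrightarrow> B = cod f \<Longrightarrow> f \<boxplus> ng f = Z A B"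
  using AX12 wtD by metis
lemma smul_add: "wt f \<Longrightarrow> wt g \<Longrightarrow> dom g = dom f \<Longrightarrow> cod g = cod f \<Longrightarrow>
    smul C a (f \<boxplus> g) = smul C a f \<boxplus> smul C a g"
  using AX13 wtD by metis
lemma add_smul: "wt f \<Longrightarrow> smul C (a + b) f = smul C a f \<boxplus> smul C b f"
  using AX14 wtD by metis
lemma smul_smul[simp]: "wt f \<Longrightarrow> smul C a (smul C b f) = smul C (a * b) f"
  using AX15 wtD by metis
lemma smul_one[simp]: "wt f \<Longrightarrow> smul C 1 f = f"
  using AX16 wtD by metis
lemma comp_addl: "wt f \<Longrightarrow> wt g \<Longrightarrow> wt g' \<Longrightarrow> dom g = cod f \<Longrightarrow> dom g' = cod f \<Longrightarrow> cod g' = cod g \<Longrightarrow>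
   (g \<boxplus> g') \<cdot> f = g \<cdot> f \<boxplus> g' \<cdot> f"
  using AX17 wtD by metis
lemma comp_addr: "wt f \<Longrightarrow> wt f' \<Longrightarrow> wt g \<Longrightarrow> dom f' = dom f \<Longrightarrow> cod f' = cod f \<Longrightarrow> dom g = cod f \<Longrightarrow>
   g \<cdot> (f \<boxplus> f') = g \<cdot> f \<boxplus> g \<cdot> f'"
  using AX18 wtD by metis
lemma comp_smull[simp]: "wt f \<Longrightarrow> wt g \<Longrightarrow> dom g = cod f \<Longrightarrow> smul C a g \<cdot> f = smul C a (g \<cdot> f)"
  using AX19 wtD by metis
lemma comp_smulr[simp]: "wt f \<Longrightarrow> wt g \<Longrightarrow> dom g = cod f \<Longrightarrow> g \<cdot> smul C a f = smul C a (g \<cdot> f)"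
  using AX19 wtD by metis
lemma tens_assoc[simp]: "wt f \<Longrightarrow> wt g \<Longrightarrow> wt h \<Longrightarrow> (f \<otimes> g) \<otimes> h = f \<otimes> (g \<otimes> h)"
  using AX23 wtD by metis
lemma tens_unitl[simp]: "wt f \<Longrightarrow> I U \<otimes> f = f"
  using AX24 wtD by metis
lemma tens_unitr[simp]: "wt f \<Longrightarrow> f \<otimes> I U = f"
  using AX24 wtD by metis
lemma tens_ident[simp]: "I A \<otimes> I B = I (A \<odot> B)"
  using AX25 by metis
lemma tens_ident2[simp]: "wt h \<Longrightarrow> I A \<otimes> (I B \<otimes> h) = I (A \<odot> B) \<otimes> h"
  using tens_assoc[of "I A" "I B" h] by simp
lemma interchange: "wt f \<Longrightarrow> wt g \<Longrightarrow> wt f' \<Longrightarrow> wt g' \<Longrightarrow> dom g = cod f \<Longrightarrow> dom g' = cod f' \<Longrightarrow>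
    (g \<cdot> f) \<otimes> (g' \<cdot> f') = (g \<otimes> g') \<cdot> (f \<otimes> f')"
  using AX26 wtD by metis
lemma tens_addl: "wt f \<Longrightarrow> wt f' \<Longrightarrow> wt g \<Longrightarrow> dom f' = dom f \<Longrightarrow> cod f' = cod f \<Longrightarrow>
    (f \<boxplus> f') \<otimes> g = f \<otimes> g \<boxplus> f' \<otimes> g"
  using AX27 wtD by metis
lemma tens_addr: "wt f \<Longrightarrow> wt f' \<Longrightarrow> wt g \<Longrightarrow> dom f' = dom f \<Longrightarrow> cod f' = cod f \<Longrightarrow>
    g \<otimes> (f \<boxplus> f') = g \<otimes> f \<boxplus> g \<otimes> f'"
  using AX27 wtD by metis
lemma tens_smull[simp]: "wt f \<Longrightarrow> wt g \<Longrightarrow> smul C a f \<otimes> g = smul C a (f \<otimes> g)"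
  using AX28 wtD by metis
lemma tens_smulr[simp]: "wt f \<Longrightarrow> wt g \<Longrightarrow> f \<otimes> smul C a g = smul C a (f \<otimes> g)"
  using AX28 wtD by metis


lemma ng_wt[simp]: "wt f \<Longrightarrow> wt (ng f)" "wt f \<Longrightarrow> dom (ng f) = dom f" "wt f \<Longrightarrow> cod (ng f) = cod f"
  by simp_all

lemma ng_ng[simp]: "wt f \<Longrightarrow> ng (ng f) = f" by simp
lemma ng_add: "wt f \<Longrightarrow> wt g \<Longrightarrow> dom g = dom f \<Longrightarrow> cod g = cod f \<Longrightarrow> ng (f \<boxplus> g) = ng f \<boxplus> ng g"
  by (rule smul_add)
lemma neg_add[simp]: "wt f \<Longrightarrow> A = dom f \<Longrightarrow> B = cod f \<Longrightarrow> ng f \<boxplus> f = Z A B"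
  using add_neg[of "ng f"] by simp

lemma self_add_zero: assumes "wt a" "a \<boxplus> a = a" shows "a = Z (dom a) (cod a)"
proof -
  have "a = a \<boxplus> (a \<boxplus> ng a)" using assms by simp
  also have "\<dots> = (a \<boxplus> a) \<boxplus> ng a" by (rule add_assoc[symmetric]) (use assms(1) in simp_all)
  also have "\<dots> = Z (dom a) (cod a)" using assms by simp
  finally show ?thesis .
qed

lemma smul_zero_scalar[simp]: assumes "wt f" shows "smul C 0 f = Z (dom f) (cod f)"
proof -
  have "smul C 0 f \<boxplus> smul C 0 f = smul C 0 f" using add_smul[of f 0 0] assms by simp
  then show ?thesis using self_add_zero[of "smul C 0 f"] assms by simp
qed

lemma smul_Z[simp]: "smul C a (Z A B) = Z A B"
proof -
  have "smul C a (Z A B) = smul C a (smul C 0 (Z A B))" by (simp only: smul_zero_scalar wt_zero)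
  also have "\<dots> = Z A B" by (subst smul_smul) simp_all
  finally show ?thesis .
qed

lemma comp_Zr[simp]: "wt g \<Longrightarrow> B = dom g \<Longrightarrow> g \<cdot> Z A B = Z A (cod g)"
proof -
  assume a: "wt g" "B = dom g"
  have "g \<cdot> Z A B = g \<cdot> smul C 0 (Z A B)" by (simp only: smul_zero_scalar wt_zero)
  also have "\<dots> = smul C 0 (g \<cdot> Z A B)" using a by (subst comp_smulr) simp_all
  also have "\<dots> = Z A (cod g)" using a by (subst smul_zero_scalar) simp_all
  finally show ?thesis .
qed
lemma comp_Zl[simp]: "wt f \<Longrightarrow> B = cod f \<Longrightarrow> Z B D \<cdot> f = Z (dom f) D"
proof -
  assume a: "wt f" "B = cod f"
  have "Z B D \<cdot> f = smul C 0 (Z B D) \<cdot> f" by (simp only: smul_zero_scalar wt_zero)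
  also have "\<dots> = smul C 0 (Z B D \<cdot> f)" using a by (subst comp_smull) simp_all
  also have "\<dots> = Z (dom f) D" using a by (subst smul_zero_scalar) simp_all
  finally show ?thesis .
qed
lemma tens_Zl[simp]: "wt g \<Longrightarrow> Z A B \<otimes> g = Z (A \<odot> dom g) (B \<odot> cod g)"
proof -
  assume a: "wt g"
  have "Z A B \<otimes> g = smul C 0 (Z A B) \<otimes> g" by (simp only: smul_zero_scalar wt_zero)
  also have "\<dots> = smul C 0 (Z A B \<otimes> g)" using a by (subst tens_smull) simp_all
  also have "\<dots> = Z (A \<odot> dom g) (B \<odot> cod g)" using a by (subst smul_zero_scalar) simp_all
  finally show ?thesis .
qed
lemma tens_Zr[simp]: "wt g \<Longrightarrow> g \<otimes> Z A B = Z (dom g \<odot> A) (cod g \<odot> B)"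
proof -
  assume a: "wt g"
  have "g \<otimes> Z A B = g \<otimes> smul C 0 (Z A B)" by (simp only: smul_zero_scalar wt_zero)
  also have "\<dots> = smul C 0 (g \<otimes> Z A B)" using a by (subst tens_smulr) simp_all
  also have "\<dots> = Z (dom g \<odot> A) (cod g \<odot> B)" using a by (subst smul_zero_scalar) simp_all
  finally show ?thesis .
qed

lemma ng_Z[simp]: "ng (Z A B) = Z A B" by simp

lemma msub_self_add: "wt a \<Longrightarrow> wt b \<Longrightarrow> dom b = dom a \<Longrightarrow> cod b = cod a \<Longrightarrow> msub C a (a \<boxplus> b) = ng b"
proof -
  assume a: "wt a" "wt b" "dom b = dom a" "cod b = cod a"
  have "msub C a (a \<boxplus> b) = a \<boxplus> (ng a \<boxplus> ng b)" unfolding msub_def using a by (subst ng_add) simp_all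
  also have "\<dots> = (a \<boxplus> ng a) \<boxplus> ng b" using a by (subst add_assoc) simp_all
  also have "\<dots> = ng b" using a by simp
  finally show ?thesis .
qed

lemma msub_self_addng: "wt a \<Longrightarrow> wt b \<Longrightarrow> dom b = dom a \<Longrightarrow> cod b = cod a \<Longrightarrow> msub C a (a \<boxplus> ng b) = b"
  using msub_self_add[of a "ng b"] by simp

lemma msub_eq_add: "wt b \<Longrightarrow> wt e \<Longrightarrow> dom e = dom b \<Longrightarrow> cod e = cod b \<Longrightarrow> a = b \<boxplus> e \<Longrightarrow> msub C a b = e"
proof -
  assume a: "wt b" "wt e" "dom e = dom b" "cod e = cod b" "a = b \<boxplus> e"
  have "msub C a b = (e \<boxplus> b) \<boxplus> ng b" unfolding msub_def a(5) using a(1-4) by (subst add_comm) simp_all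
  also have "\<dots> = e \<boxplus> (b \<boxplus> ng b)" using a by (subst add_assoc) simp_all
  also have "\<dots> = e" using a by simp
  finally show ?thesis .
qed

lemma eq_add_ng: "wt b \<Longrightarrow> wt e \<Longrightarrow> dom e = dom b \<Longrightarrow> cod e = cod b \<Longrightarrow> a = b \<boxplus> e \<Longrightarrow> b = a \<boxplus> ng e"
proof -
  assume a: "wt b" "wt e" "dom e = dom b" "cod e = cod b" "a = b \<boxplus> e"
  have "a \<boxplus> ng e = b \<boxplus> (e \<boxplus> ng e)" unfolding a(5) using a(1-4) by (subst add_assoc) simp_all
  then show ?thesis using a by simp
qed

lemma sub_eq: "wt p \<Longrightarrow> wt q \<Longrightarrow> dom q = dom p \<Longrightarrow> cod q = cod p \<Longrightarrow> p \<boxplus> ng q = r \<Longrightarrow> q = p \<boxplus> ng r"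
proof -
  assume a: "wt p" "wt q" "dom q = dom p" "cod q = cod p" "p \<boxplus> ng q = r"
  have "p \<boxplus> ng r = p \<boxplus> (ng p \<boxplus> q)" unfolding a(5)[symmetric] using a(1-4) by (subst ng_add) simp_all
  also have "\<dots> = (p \<boxplus> ng p) \<boxplus> q" using a by (subst add_assoc) simp_all
  also have "\<dots> = q" using a by simp
  finally show ?thesis by simp
qed

definition W where "W A g B = I A \<otimes> (g \<otimes> I B)"

lemma wt_W[simp]: "wt g \<Longrightarrow> wt (W A g B)" "wt g \<Longrightarrow> dom (W A g B) = A \<odot> dom g \<odot> B"
   "wt g \<Longrightarrow> cod (W A g B) = A \<odot> cod g \<odot> B"
  by (simp_all add: W_def)

lemma W_comp: "wt g \<Longrightarrow> wt h \<Longrightarrow> dom g = cod h \<Longrightarrow> W A g B \<cdot> W A h B = W A (g \<cdot> h) B"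
  unfolding W_def by (simp add: interchange[symmetric])

lemma tW1: "wt g \<Longrightarrow> g \<otimes> I B = W U g B" by (simp add: W_def)
lemma tW2: "wt g \<Longrightarrow> I A \<otimes> g = W A g U" by (simp add: W_def)
lemma tW3: "wt g \<Longrightarrow> W A g B \<otimes> I D = W A g (B \<odot> D)" by (simp add: W_def)
lemma tW4: "wt g \<Longrightarrow> I D \<otimes> W A g B = W (D \<odot> A) g B" by (simp add: W_def)
lemma W_unit: "wt g \<Longrightarrow> W U g U = g" by (simp add: W_def)
lemma W_id: "W A (I P) B = I (A \<odot> P \<odot> B)" by (simp add: W_def)
lemma W_W: "wt g \<Longrightarrow> W A (W A' g B') B = W (A \<odot> A') g (B' \<odot> B)" by (simp add: W_def)
lemma W_Z: "W A (Z P Q) B = Z (A \<odot> P \<odot> B) (A \<odot> Q \<odot> B)" by (simp add: W_def)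
lemma W_smul: "wt g \<Longrightarrow> W A (smul C a g) B = smul C a (W A g B)" by (simp add: W_def)
lemma W_add: "wt g \<Longrightarrow> wt h \<Longrightarrow> dom h = dom g \<Longrightarrow> cod h = cod g \<Longrightarrow> W A (g \<boxplus> h) B = W A g B \<boxplus> W A h B"
  by (simp add: W_def tens_addl tens_addr)

lemmas Wsimps[simp] = tW1 tW2 tW3 tW4 W_unit W_id W_W W_Z W_smul

lemma tens_as_comp1: "wt g \<Longrightarrow> wt h \<Longrightarrow> g \<otimes> h = W U g (cod h) \<cdot> W (dom g) h U"
proof -
  assume a: "wt g" "wt h"
  have "g \<otimes> h = (g \<cdot> I (dom g)) \<otimes> (I (cod h) \<cdot> h)" using a by simp
  also have "\<dots> = (g \<otimes> I (cod h)) \<cdot> (I (dom g) \<otimes> h)" using a by (simp only: interchange wt_ident)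
  finally show ?thesis using a by simp
qed
lemma tens_as_comp2: "wt g \<Longrightarrow> wt h \<Longrightarrow> g \<otimes> h = W (cod g) h U \<cdot> W U g (dom h)"
proof -
  assume a: "wt g" "wt h"
  have "g \<otimes> h = (I (cod g) \<cdot> g) \<otimes> (h \<cdot> I (dom h))" using a by simp
  also have "\<dots> = (I (cod g) \<otimes> h) \<cdot> (g \<otimes> I (dom h))" using a by (simp only: interchange wt_ident)
  finally show ?thesis using a by simp
qed

lemma W_commute: assumes "wt g" "wt h"
  shows "W (A \<odot> cod g \<odot> M) h B \<cdot> W A g (M \<odot> dom h \<odot> B) = W A g (M \<odot> cod h \<odot> B) \<cdot> W (A \<odot> dom g \<odot> M) h B"
proof -
  have "W A (g \<otimes> W M h U) B = W A (W U g (M \<odot> cod h) \<cdot> W (dom g \<odot> M) h U) B"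
    using assms tens_as_comp1[of g "W M h U"] by simp
  also have "\<dots> = W A g (M \<odot> cod h \<odot> B) \<cdot> W (A \<odot> dom g \<odot> M) h B"
    using assms by (simp add: W_comp[symmetric])
  finally have 1: "W A (g \<otimes> W M h U) B = W A g (M \<odot> cod h \<odot> B) \<cdot> W (A \<odot> dom g \<odot> M) h B" .
  have "W A (g \<otimes> W M h U) B = W A (W (cod g \<odot> M) h U \<cdot> W U g (M \<odot> dom h)) B"
    using assms tens_as_comp2[of g "W M h U"] by simp
  also have "\<dots> = W (A \<odot> cod g \<odot> M) h B \<cdot> W A g (M \<odot> dom h \<odot> B)"
    using assms by (simp add: W_comp[symmetric])
  finally show ?thesis using 1 by simp
qed


lemma tailI: "a \<cdot> b = c \<cdot> e \<Longrightarrow> wt a \<Longrightarrow> wt b \<Longrightarrow> wt c \<Longrightarrow> wt e \<Longrightarrow> wt r \<Longrightarrow>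
   dom a = cod b \<Longrightarrow> dom c = cod e \<Longrightarrow> dom b = cod r \<Longrightarrow> dom e = cod r \<Longrightarrow> a \<cdot> (b \<cdot> r) = c \<cdot> (e \<cdot> r)"
  by (metis assoc)

lemma tailJ: "a \<cdot> b = h \<Longrightarrow> wt a \<Longrightarrow> wt b \<Longrightarrow> wt r \<Longrightarrow>
   dom a = cod b \<Longrightarrow> dom b = cod r \<Longrightarrow> a \<cdot> (b \<cdot> r) = h \<cdot> r"
  by (metis assoc)

lemma msum_wt:
  assumes "\<forall>r<n. wt (g r) \<and> dom (g r) = A \<and> cod (g r) = B"
  shows "wt (msum C A B g n) \<and> dom (msum C A B g n) = A \<and> cod (msum C A B g n) = B"
  using assms by (induction n) auto

lemma msum_compl:
  assumes "\<forall>r<n. wt (g r) \<and> dom (g r) = A \<and> cod (g r) = B" "wt h" "cod h = A"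
  shows "msum C A B g n \<cdot> h = msum C (dom h) B (\<lambda>r. g r \<cdot> h) n"
  using assms
proof (induction n)
  case 0 then show ?case by simp
next
  case (Suc n)
  then have "msum C A B g n \<cdot> h = msum C (dom h) B (\<lambda>r. g r \<cdot> h) n" by simp
  moreover have "wt (msum C A B g n) \<and> dom (msum C A B g n) = A \<and> cod (msum C A B g n) = B"
    using Suc.prems msum_wt[of n g A B] by simp
  ultimately show ?case using Suc.prems by (simp add: comp_addl)
qed

lemma msum_compr:
  assumes "\<forall>r<n. wt (g r) \<and> dom (g r) = A \<and> cod (g r) = B" "wt h" "dom h = B"
  shows "h \<cdot> msum C A B g n = msum C A (cod h) (\<lambda>r. h \<cdot> g r) n"
  using assms
proof (induction n)
  case 0 then show ?case by simp
next
  case (Suc n)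
  then have "h \<cdot> msum C A B g n = msum C A (cod h) (\<lambda>r. h \<cdot> g r) n" by simp
  moreover have "wt (msum C A B g n) \<and> dom (msum C A B g n) = A \<and> cod (msum C A B g n) = B"
    using Suc.prems msum_wt[of n g A B] by simp
  ultimately show ?case using Suc.prems by (simp add: comp_addr)
qed

lemma msum_cong: "(\<forall>r<n. g r = g' r) \<Longrightarrow> msum C A B g n = msum C A B g' n"
  by (induction n) auto

lemma msum_zero: "(\<forall>r<n. g r = Z A B) \<Longrightarrow> msum C A B g n = Z A B"
  by (induction n) auto

lemma msum_last: assumes "0 < n" "\<forall>r<n - 1. g r = Z A B" "wt (g (n - 1))" "dom (g (n-1)) = A" "cod (g (n-1)) = B"
  shows "msum C A B g n = g (n - 1)"
proof -
  obtain m where m: "n = Suc m" using assms(1) by (cases n) auto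
  have "msum C A B g m = Z A B" using assms(2) m by (intro msum_zero) simp
  then show ?thesis using m assms by simp
qed

lemma mpow_wt[simp]: "wt x \<Longrightarrow> dom x = A \<Longrightarrow> cod x = A \<Longrightarrow> wt (mpow C A x r)"
   "wt x \<Longrightarrow> dom x = A \<Longrightarrow> cod x = A \<Longrightarrow> dom (mpow C A x r) = A"
   "wt x \<Longrightarrow> dom x = A \<Longrightarrow> cod x = A \<Longrightarrow> cod (mpow C A x r) = A"
  by (induction r) auto

lemma mpow_comm: "wt x \<Longrightarrow> dom x = A \<Longrightarrow> cod x = A \<Longrightarrow> mpow C A x r \<cdot> x = x \<cdot> mpow C A x r"
  by (induction r) (auto simp: assoc)

end

locale heis = slm C for C :: "('o,'m,'k::comm_ring_1) slmcat" +
  fixes lev :: int and up dn :: 'o and x s c d tau :: 'm and e f :: "nat \<Rightarrow> 'm"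
  assumes rels: "heis_rels C lev up dn x s c d tau e f"
begin

abbreviation u where "u \<equiv> up"
abbreviation n where "n \<equiv> dn"
abbreviation T where "T \<equiv> heis_t C up dn s c d"
abbreviation X' where "X' \<equiv> heis_x' C dn x c d"
abbreviation xp where "xp r \<equiv> mpow C up x r"

lemmas R = rels[unfolded heis_rels_def Let_def]

lemma gen_typ: "x \<in> hom C u u" "s \<in> hom C (u \<odot> u) (u \<odot> u)" "c \<in> hom C U (n \<odot> u)" "d \<in> hom C (u \<odot> n) U"
   "tau \<in> hom C (n \<odot> u) (u \<odot> n)"
  using R by blast+

lemma wt_gen[simp]: "wt x" "dom x = u" "cod x = u" "wt s" "dom s = u \<odot> u" "cod s = u \<odot> u"
  "wt c" "dom c = U" "cod c = n \<odot> u" "wt d" "dom d = u \<odot> n" "cod d = U"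
  "wt tau" "dom tau = n \<odot> u" "cod tau = u \<odot> n"
  using gen_typ homD by blast+

lemma H1: "s \<cdot> s = I (u \<odot> u)" using R by blast
lemma H3: "msub C (W U x u \<cdot> s) (s \<cdot> W u x U) = I (u \<odot> u)" using R by simp
lemma A1: "W U d u \<cdot> W u c U = I u" using R by simp
lemma A2: "W n d U \<cdot> W U c n = I n" using R by simp

lemma T_eq: "T = W (n \<odot> u) d U \<cdot> W n s n \<cdot> W U c (u \<odot> n)"
  unfolding heis_t_def by simp
lemma X'_eq: "X' = W n d U \<cdot> W n x n \<cdot> W U c n"
  unfolding heis_x'_def by simp

lemma wt_T[simp]: "wt T" "dom T = u \<odot> n" "cod T = n \<odot> u" by (simp_all add: T_eq)
lemma wt_X'[simp]: "wt X'" "dom X' = n" "cod X' = n" by (simp_all add: X'_eq)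


lemma L3: "d \<cdot> W u X' U = d \<cdot> W U x n"
proof -
  have 1: "W u X' U = W (u \<odot> n) d U \<cdot> (W (u \<odot> n) x n \<cdot> W u c n)" by (simp add: X'_eq W_comp[symmetric])
  have 2: "d \<cdot> W (u \<odot> n) d U = d \<cdot> W U d (u \<odot> n)" using W_commute[of d d U U U] by simp
  have 3: "W U d (u \<odot> n) \<cdot> W (u \<odot> n) x n = W U x n \<cdot> W U d (u \<odot> n)" using W_commute[of d x U U n] by simp
  have 4: "W U d (u \<odot> n) \<cdot> W u c n = W U (W U d u \<cdot> W u c U) n" by (simp add: W_comp[symmetric])
  have 5: "W U d (u \<odot> n) \<cdot> W u c n = I (u \<odot> n)" unfolding 4 by (simp add: A1)
  have "d \<cdot> W u X' U = (d \<cdot> W (u \<odot> n) d U) \<cdot> (W (u \<odot> n) x n \<cdot> W u c n)" unfolding 1 by (simp add: assoc)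
  also have "\<dots> = d \<cdot> (W U d (u \<odot> n) \<cdot> (W (u \<odot> n) x n \<cdot> W u c n))" unfolding 2 by (simp add: assoc)
  also have "\<dots> = d \<cdot> (W U x n \<cdot> (W U d (u \<odot> n) \<cdot> W u c n))" by (simp add: 3[THEN tailI])
  also have "\<dots> = d \<cdot> W U x n" by (simp add: 5)
  finally show ?thesis .
qed

lemma L4: "W U X' u \<cdot> c = W n x U \<cdot> c"
proof -
  have 1: "W U X' u = W n d u \<cdot> (W n x (n \<odot> u) \<cdot> W U c (n \<odot> u))" by (simp add: X'_eq W_comp[symmetric])
  have 2: "W U c (n \<odot> u) \<cdot> c = W (n \<odot> u) c U \<cdot> c" using W_commute[of c c U U U] by simp
  have 3: "W n x (n \<odot> u) \<cdot> W (n \<odot> u) c U = W (n \<odot> u) c U \<cdot> W n x U" using W_commute[of x c n U U] by simp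
  have 4: "W n d u \<cdot> W (n \<odot> u) c U = W n (W U d u \<cdot> W u c U) U" by (simp add: W_comp[symmetric])
  have 5: "W n d u \<cdot> W (n \<odot> u) c U = I (n \<odot> u)" unfolding 4 by (simp add: A1)
  have "W U X' u \<cdot> c = W n d u \<cdot> (W n x (n \<odot> u) \<cdot> (W U c (n \<odot> u) \<cdot> c))" unfolding 1 by (simp add: assoc)
  also have "\<dots> = W n d u \<cdot> (W n x (n \<odot> u) \<cdot> W (n \<odot> u) c U \<cdot> c)" unfolding 2 by simp
  also have "\<dots> = W n d u \<cdot> (W (n \<odot> u) c U \<cdot> (W n x U \<cdot> c))" by (simp add: 3[THEN tailI])
  also have "\<dots> = W n x U \<cdot> c" by (simp add: 5[THEN tailJ])
  finally show ?thesis .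
qed


lemma Hs1: "s \<cdot> W u x U = W U x u \<cdot> s \<boxplus> ng (I (u \<odot> u))"
  using H3 by (intro sub_eq) (simp_all add: msub_def)

lemma Hs2: "W u x U \<cdot> s = s \<cdot> W U x u \<boxplus> ng (I (u \<odot> u))"
proof -
  have "s \<cdot> ((W U x u \<cdot> s \<boxplus> ng (s \<cdot> W u x U)) \<cdot> s) = s \<cdot> (I (u \<odot> u) \<cdot> s)"
    using H3 by (simp add: msub_def)
  then have "s \<cdot> W U x u \<boxplus> ng (W u x U \<cdot> s) = I (u \<odot> u)"
    by (simp add: comp_addl comp_addr assoc H1 H1[THEN tailJ])
  then show ?thesis by (intro sub_eq) simp_all
qed

lemma D1: "T \<cdot> W U x n = W n x U \<cdot> T \<boxplus> ng (c \<cdot> d)"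
proof -
  have E1: "W U c (u \<odot> n) \<cdot> W U x n = W (n \<odot> u) x n \<cdot> W U c (u \<odot> n)"
    using W_commute[of c x U U n] by simp
  have E2: "W n s n \<cdot> W (n \<odot> u) x n = W n x (u \<odot> n) \<cdot> W n s n \<boxplus> ng (I (n \<odot> u \<odot> u \<odot> n))"
  proof -
    have "W n s n \<cdot> W (n \<odot> u) x n = W n (s \<cdot> W u x U) n" by (simp add: W_comp[symmetric])
    also have "\<dots> = W n (W U x u \<cdot> s \<boxplus> ng (I (u \<odot> u))) n" by (simp add: Hs1)
    also have "\<dots> = W n x (u \<odot> n) \<cdot> W n s n \<boxplus> ng (I (n \<odot> u \<odot> u \<odot> n))"
      by (simp add: W_add W_comp[symmetric])
    finally show ?thesis .
  qed
  have E3: "W (n \<odot> u) d U \<cdot> W n x (u \<odot> n) = W n x U \<cdot> W (n \<odot> u) d U"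
    using W_commute[of x d n U U] by simp
  have E4: "W (n \<odot> u) d U \<cdot> W U c (u \<odot> n) = c \<cdot> d"
    using W_commute[of c d U U U] by simp
  have "T \<cdot> W U x n = W (n \<odot> u) d U \<cdot> (W n s n \<cdot> (W U c (u \<odot> n) \<cdot> W U x n))"
    by (simp add: T_eq assoc)
  also have "\<dots> = W (n \<odot> u) d U \<cdot> ((W n s n \<cdot> W (n \<odot> u) x n) \<cdot> W U c (u \<odot> n))"
    by (simp add: E1 assoc)
  also have "\<dots> = W (n \<odot> u) d U \<cdot> ((W n x (u \<odot> n) \<cdot> W n s n \<boxplus> ng (I (n \<odot> u \<odot> u \<odot> n))) \<cdot> W U c (u \<odot> n))"
    by (simp only: E2)
  also have "\<dots> = W (n \<odot> u) d U \<cdot> W n x (u \<odot> n) \<cdot> W n s n \<cdot> W U c (u \<odot> n) \<boxplus> ng (W (n \<odot> u) d U \<cdot> W U c (u \<odot> n))"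
    by (simp add: comp_addl comp_addr assoc)
  also have "\<dots> = W n x U \<cdot> T \<boxplus> ng (c \<cdot> d)"
    by (simp add: E3[THEN tailI] E4 T_eq)
  finally show ?thesis .
qed


lemma D2: "T \<cdot> W u X' U = W U X' u \<cdot> T \<boxplus> ng (c \<cdot> d)"
proof -
  have E1: "W U c (u \<odot> n) \<cdot> W u X' U = W (n \<odot> u \<odot> u) X' U \<cdot> W U c (u \<odot> n)"
    using W_commute[of c X' U u U] by simp
  have E2: "W n s n \<cdot> W (n \<odot> u \<odot> u) X' U = W (n \<odot> u \<odot> u) X' U \<cdot> W n s n"
    using W_commute[of s X' n U U] by simp
  have E3: "W (n \<odot> u) d U \<cdot> W (n \<odot> u \<odot> u) X' U = W (n \<odot> u) d U \<cdot> W (n \<odot> u) x n"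
  proof -
    have "W (n \<odot> u) d U \<cdot> W (n \<odot> u \<odot> u) X' U = W (n \<odot> u) (d \<cdot> W u X' U) U"
      by (simp add: W_comp[symmetric])
    also have "\<dots> = W (n \<odot> u) (d \<cdot> W U x n) U" by (simp only: L3)
    also have "\<dots> = W (n \<odot> u) d U \<cdot> W (n \<odot> u) x n" by (simp add: W_comp[symmetric])
    finally show ?thesis .
  qed
  have E4: "W (n \<odot> u) x n \<cdot> W n s n = W n s n \<cdot> W n x (u \<odot> n) \<boxplus> ng (I (n \<odot> u \<odot> u \<odot> n))"
  proof -
    have "W (n \<odot> u) x n \<cdot> W n s n = W n (W u x U \<cdot> s) n" by (simp add: W_comp[symmetric])
    also have "\<dots> = W n (s \<cdot> W U x u \<boxplus> ng (I (u \<odot> u))) n" by (simp only: Hs2)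
    also have "\<dots> = W n s n \<cdot> W n x (u \<odot> n) \<boxplus> ng (I (n \<odot> u \<odot> u \<odot> n))"
      by (simp add: W_add W_comp[symmetric])
    finally show ?thesis .
  qed
  have E5: "W n x (u \<odot> n) \<cdot> W U c (u \<odot> n) = W U X' (u \<odot> u \<odot> n) \<cdot> W U c (u \<odot> n)"
  proof -
    have "W n x (u \<odot> n) \<cdot> W U c (u \<odot> n) = W U (W n x U \<cdot> c) (u \<odot> n)" by (simp add: W_comp[symmetric])
    also have "\<dots> = W U (W U X' u \<cdot> c) (u \<odot> n)" by (simp only: L4)
    also have "\<dots> = W U X' (u \<odot> u \<odot> n) \<cdot> W U c (u \<odot> n)" by (simp add: W_comp[symmetric])
    finally show ?thesis .
  qed
  have E6: "W n s n \<cdot> W U X' (u \<odot> u \<odot> n) = W U X' (u \<odot> u \<odot> n) \<cdot> W n s n"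
    using W_commute[of X' s U U n] by simp
  have E7: "W (n \<odot> u) d U \<cdot> W U X' (u \<odot> u \<odot> n) = W U X' u \<cdot> W (n \<odot> u) d U"
    using W_commute[of X' d U u U] by simp
  have E8: "W (n \<odot> u) d U \<cdot> W U c (u \<odot> n) = c \<cdot> d"
    using W_commute[of c d U U U] by simp
  have "T \<cdot> W u X' U = W (n \<odot> u) d U \<cdot> (W n s n \<cdot> (W U c (u \<odot> n) \<cdot> W u X' U))"
    by (simp add: T_eq assoc)
  also have "\<dots> = (W (n \<odot> u) d U \<cdot> W (n \<odot> u \<odot> u) X' U) \<cdot> (W n s n \<cdot> W U c (u \<odot> n))"
    by (simp add: E1 E2[THEN tailI] assoc)
  also have "\<dots> = W (n \<odot> u) d U \<cdot> ((W (n \<odot> u) x n \<cdot> W n s n) \<cdot> W U c (u \<odot> n))"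
    by (simp add: E3 assoc)
  also have "\<dots> = W (n \<odot> u) d U \<cdot> ((W n s n \<cdot> W n x (u \<odot> n) \<boxplus> ng (I (n \<odot> u \<odot> u \<odot> n))) \<cdot> W U c (u \<odot> n))"
    by (simp only: E4)
  also have "\<dots> = W (n \<odot> u) d U \<cdot> W n s n \<cdot> W n x (u \<odot> n) \<cdot> W U c (u \<odot> n) \<boxplus> ng (W (n \<odot> u) d U \<cdot> W U c (u \<odot> n))"
    by (simp add: comp_addl comp_addr assoc)
  also have "\<dots> = W (n \<odot> u) d U \<cdot> W n s n \<cdot> W U X' (u \<odot> u \<odot> n) \<cdot> W U c (u \<odot> n) \<boxplus> ng (c \<cdot> d)"
    by (simp only: E5 E8)
  also have "\<dots> = W U X' u \<cdot> T \<boxplus> ng (c \<cdot> d)"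
    by (simp add: E6[THEN tailI] E7[THEN tailI] T_eq)
  finally show ?thesis .
qed


abbreviation dx where "dx r \<equiv> d \<cdot> W U (xp r) n"
abbreviation cx where "cx r \<equiv> W n (xp r) U \<cdot> c"

lemma wt_xp[simp]: "wt (xp r)" "dom (xp r) = u" "cod (xp r) = u" by simp_all

lemma xp_Suc: "xp (Suc r) = x \<cdot> xp r" by simp

lemma D3: "dx r \<cdot> W U x n = dx (Suc r)"
proof -
  have "W U (xp r) n \<cdot> W U x n = W U (xp (Suc r)) n"
    by (simp add: W_comp mpow_comm del: mpow.simps) (simp add: mpow_comm)
  then show ?thesis by (simp add: assoc del: mpow.simps)
qed


lemma xpW1: "W U (xp r) n \<cdot> W U x n = W U (xp (Suc r)) n"
  by (simp add: W_comp mpow_comm del: mpow.simps) (simp add: mpow_comm)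
lemma xpW2: "W U x n \<cdot> W U (xp r) n = W U (xp (Suc r)) n"
  by (simp add: W_comp)
lemma xpW3: "W n (xp r) U \<cdot> W n x U = W n (xp (Suc r)) U"
  by (simp add: W_comp mpow_comm del: mpow.simps) (simp add: mpow_comm)
lemma xpW4: "W n x U \<cdot> W n (xp r) U = W n (xp (Suc r)) U"
  by (simp add: W_comp)

lemma D4: "dx r \<cdot> W u X' U = dx (Suc r)"
proof -
  have 1: "W U (xp r) n \<cdot> W u X' U = W u X' U \<cdot> W U (xp r) n"
    using W_commute[of "xp r" X' U U U] by simp
  have "dx r \<cdot> W u X' U = d \<cdot> (W u X' U \<cdot> W U (xp r) n)" by (simp add: assoc 1 del: mpow.simps)
  also have "\<dots> = d \<cdot> W U x n \<cdot> W U (xp r) n" by (simp add: assoc[symmetric] L3 del: mpow.simps)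
  also have "\<dots> = dx (Suc r)" by (simp add: xpW2 del: mpow.simps)
  finally show ?thesis .
qed

lemma D5: "W n x U \<cdot> cx r = cx (Suc r)"
  by (simp add: assoc[symmetric] xpW4 del: mpow.simps)

lemma D6: "W U X' u \<cdot> cx r = cx (Suc r)"
proof -
  have 1: "W U X' u \<cdot> W n (xp r) U = W n (xp r) U \<cdot> W U X' u"
    using W_commute[of X' "xp r" U U U] by simp
  have "W U X' u \<cdot> cx r = W n (xp r) U \<cdot> (W U X' u \<cdot> c)" by (simp add: assoc[symmetric] 1 del: mpow.simps)
  also have "\<dots> = W n (xp r) U \<cdot> W n x U \<cdot> c" by (simp add: L4)
  also have "\<dots> = cx (Suc r)" by (simp add: assoc[symmetric] xpW3 del: mpow.simps)
  finally show ?thesis .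
qed


lemma T_raw: "heis_t C up dn s c d = T" ..

lemma inv_pos: assumes "0 \<le> lev" shows
  "tau \<cdot> T \<boxplus> msum C (u \<odot> n) (u \<odot> n) (\<lambda>r. e r \<cdot> dx r) (nat lev) = I (u \<odot> n)"
  "T \<cdot> tau = I (n \<odot> u)"
  "\<forall>r < nat lev. T \<cdot> e r = Z U (n \<odot> u)"
  "\<forall>r < nat lev. dx r \<cdot> tau = Z (n \<odot> u) U"
  "\<forall>r < nat lev. \<forall>q < nat lev. dx r \<cdot> e q = (if r = q then I U else Z U U)"
  "\<forall>r < nat lev. e r \<in> hom C U (u \<odot> n)"
  using R assms by (simp_all del: mpow.simps)

lemma inv_neg: assumes "lev < 0" shows
  "T \<cdot> tau \<boxplus> msum C (n \<odot> u) (n \<odot> u) (\<lambda>r. cx r \<cdot> f r) (nat (- lev)) = I (n \<odot> u)"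
  "tau \<cdot> T = I (u \<odot> n)"
  "\<forall>r < nat (- lev). tau \<cdot> cx r = Z U (u \<odot> n)"
  "\<forall>r < nat (- lev). f r \<cdot> T = Z (u \<odot> n) U"
  "\<forall>r < nat (- lev). \<forall>q < nat (- lev). f r \<cdot> cx q = (if r = q then I U else Z U U)"
  "\<forall>r < nat (- lev). f r \<in> hom C (n \<odot> u) U"
  using R assms by (simp_all del: mpow.simps)


declare mpow.simps(2)[simp del]

abbreviation CC where "CC \<equiv> heis_c' C lev up dn x c tau e"
abbreviation DD where "DD \<equiv> heis_d' C lev up dn x d tau f"

lemma DD_pos: "0 \<le> lev \<Longrightarrow> DD = d \<cdot> (W U (xp (nat lev)) n \<cdot> tau)"
  by (simp add: heis_d'_def)
lemma CC_zero: "lev = 0 \<Longrightarrow> CC = tau \<cdot> c"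
  by (simp add: heis_c'_def)
lemma CC_pos: "0 < lev \<Longrightarrow> CC = ng (e (nat lev - 1))"
  by (simp add: heis_c'_def)
lemma CC_neg: "lev < 0 \<Longrightarrow> CC = tau \<cdot> cx (nat (- lev))"
  by (simp add: heis_c'_def)
lemma DD_neg: "lev < 0 \<Longrightarrow> DD = f (nat (- lev) - 1)"
  by (simp add: heis_d'_def)

lemma e_wt: "0 \<le> lev \<Longrightarrow> r < nat lev \<Longrightarrow> wt (e r) \<and> dom (e r) = U \<and> cod (e r) = u \<odot> n"
  using inv_pos(6) homD by blast
lemma f_wt: "lev < 0 \<Longrightarrow> r < nat (- lev) \<Longrightarrow> wt (f r) \<and> dom (f r) = n \<odot> u \<and> cod (f r) = U"
  using inv_neg(6) homD by blast

lemma abs_pos_a: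
  assumes lev: "0 \<le> lev"
  and P: "wt \<Phi>" "dom \<Phi> = u \<odot> n" "cod \<Phi> = u \<odot> n" and Q: "wt \<Psi>" "dom \<Psi> = n \<odot> u" "cod \<Psi> = n \<odot> u"
  and h1: "T \<cdot> \<Phi> = \<Psi> \<cdot> T \<boxplus> ng (c \<cdot> d)"
  and h2: "\<And>r. dx r \<cdot> \<Phi> = dx (Suc r)"
  shows "\<Phi> \<cdot> tau = tau \<cdot> \<Psi> \<boxplus> ng (CC \<cdot> DD)"
proof -
  define K where "K = nat lev"
  have et: "\<forall>r<K. wt (e r) \<and> dom (e r) = U \<and> cod (e r) = u \<odot> n" using e_wt lev K_def by blast
  define S where "S = msum C (u \<odot> n) (u \<odot> n) (\<lambda>r. e r \<cdot> dx r) K"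
  have St: "wt S" "dom S = u \<odot> n" "cod S = u \<odot> n" using msum_wt[of K "\<lambda>r. e r \<cdot> dx r"] et unfolding S_def by simp_all
  have IS: "tau \<cdot> T \<boxplus> S = I (u \<odot> n)" unfolding S_def K_def by (rule inv_pos(1)[OF lev])
  have 1: "\<Phi> \<cdot> tau = (tau \<cdot> T \<boxplus> S) \<cdot> (\<Phi> \<cdot> tau)" unfolding IS using P by simp
  have 2: "(tau \<cdot> T \<boxplus> S) \<cdot> (\<Phi> \<cdot> tau) = tau \<cdot> ((T \<cdot> \<Phi>) \<cdot> tau) \<boxplus> S \<cdot> (\<Phi> \<cdot> tau)"
    using P St by (simp add: comp_addl assoc)
  have 3: "tau \<cdot> ((T \<cdot> \<Phi>) \<cdot> tau) = tau \<cdot> \<Psi> \<boxplus> ng (tau \<cdot> (c \<cdot> (d \<cdot> tau)))"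
    using P Q by (simp add: h1 comp_addl comp_addr assoc inv_pos(2)[OF lev])
  have 4: "S \<cdot> (\<Phi> \<cdot> tau) = msum C (n \<odot> u) (u \<odot> n) (\<lambda>r. e r \<cdot> (dx (Suc r) \<cdot> tau)) K"
  proof -
    have "S \<cdot> (\<Phi> \<cdot> tau) = msum C (n \<odot> u) (u \<odot> n) (\<lambda>r. (e r \<cdot> dx r) \<cdot> (\<Phi> \<cdot> tau)) K"
      unfolding S_def using P et by (subst msum_compl) simp_all
    also have "\<dots> = msum C (n \<odot> u) (u \<odot> n) (\<lambda>r. e r \<cdot> (dx (Suc r) \<cdot> tau)) K"
    proof (rule msum_cong, intro allI impI)
      fix r assume r: "r < K"
      have "(e r \<cdot> dx r) \<cdot> (\<Phi> \<cdot> tau) = e r \<cdot> ((dx r \<cdot> \<Phi>) \<cdot> tau)" using et r P by (simp add: assoc)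
      then show "(e r \<cdot> dx r) \<cdot> (\<Phi> \<cdot> tau) = e r \<cdot> (dx (Suc r) \<cdot> tau)" by (simp add: h2)
    qed
    finally show ?thesis .
  qed
  have Mt: "\<forall>r<K. wt (e r \<cdot> (dx (Suc r) \<cdot> tau)) \<and> dom (e r \<cdot> (dx (Suc r) \<cdot> tau)) = n \<odot> u \<and> cod (e r \<cdot> (dx (Suc r) \<cdot> tau)) = u \<odot> n"
    using et by simp
  have 5: "\<Phi> \<cdot> tau = (tau \<cdot> \<Psi> \<boxplus> ng (tau \<cdot> (c \<cdot> (d \<cdot> tau)))) \<boxplus> msum C (n \<odot> u) (u \<odot> n) (\<lambda>r. e r \<cdot> (dx (Suc r) \<cdot> tau)) K"
    using 1 2 3 4 by simp
  show ?thesis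
  proof (cases "K = 0")
    case True
    then have l0: "lev = 0" using lev K_def by simp
    show ?thesis unfolding 5 CC_zero[OF l0] DD_pos[OF lev] using True Q by (simp add: l0 assoc)
  next
    case False
    then have l0: "0 < lev" using lev K_def by simp
    have dt: "d \<cdot> tau = Z (n \<odot> u) U" using spec[OF inv_pos(4)[OF lev], of 0] False K_def by simp
    have ms: "msum C (n \<odot> u) (u \<odot> n) (\<lambda>r. e r \<cdot> (dx (Suc r) \<cdot> tau)) K = e (K - 1) \<cdot> (dx K \<cdot> tau)"
    proof (subst msum_last)
      show "0 < K" using False by simp
      show "\<forall>r<K - 1. e r \<cdot> (dx (Suc r) \<cdot> tau) = Z (n \<odot> u) (u \<odot> n)"
        using inv_pos(4)[OF lev] et K_def by auto
      show "wt (e (K - 1) \<cdot> (dx (Suc (K - 1)) \<cdot> tau))" "dom (e (K - 1) \<cdot> (dx (Suc (K - 1)) \<cdot> tau)) = n \<odot> u"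
        "cod (e (K - 1) \<cdot> (dx (Suc (K - 1)) \<cdot> tau)) = u \<odot> n" using spec[OF Mt, of "K - 1"] False by auto
      show "e (K - 1) \<cdot> (dx (Suc (K - 1)) \<cdot> tau) = e (K - 1) \<cdot> (dx K \<cdot> tau)" using False by simp
    qed
    have eK: "wt (e (K - 1))" "dom (e (K - 1)) = U" "cod (e (K - 1)) = u \<odot> n" using et False by auto
    show ?thesis unfolding 5 ms using Q eK
      by (simp add: CC_pos[OF l0] DD_pos lev dt K_def[symmetric] assoc)
  qed
qed


lemma abs_neg_a:
  assumes lev: "lev < 0"
  and P: "wt \<Phi>" "dom \<Phi> = u \<odot> n" "cod \<Phi> = u \<odot> n" and Q: "wt \<Psi>" "dom \<Psi> = n \<odot> u" "cod \<Psi> = n \<odot> u"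
  and h1: "T \<cdot> \<Phi> = \<Psi> \<cdot> T \<boxplus> ng (c \<cdot> d)"
  and h3: "\<And>r. \<Psi> \<cdot> cx r = cx (Suc r)"
  shows "\<Phi> \<cdot> tau = tau \<cdot> \<Psi> \<boxplus> ng (CC \<cdot> DD)"
proof -
  define K where "K = nat (- lev)"
  have K0: "0 < K" using lev K_def by simp
  have ft: "\<forall>r<K. wt (f r) \<and> dom (f r) = n \<odot> u \<and> cod (f r) = U" using f_wt lev K_def by blast
  define S where "S = msum C (n \<odot> u) (n \<odot> u) (\<lambda>r. cx r \<cdot> f r) K"
  have St: "wt S" "dom S = n \<odot> u" "cod S = n \<odot> u" using msum_wt[of K "\<lambda>r. cx r \<cdot> f r"] ft unfolding S_def by simp_all
  have IS: "T \<cdot> tau \<boxplus> S = I (n \<odot> u)" unfolding S_def K_def by (rule inv_neg(1)[OF lev])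
  have tT: "tau \<cdot> T = I (u \<odot> n)" by (rule inv_neg(2)[OF lev])
  have tc: "tau \<cdot> c = Z U (u \<odot> n)" using spec[OF inv_neg(3)[OF lev], of 0] K0 K_def by simp
  have h1': "\<Psi> \<cdot> T = T \<cdot> \<Phi> \<boxplus> c \<cdot> d"
    using eq_add_ng[OF _ _ _ _ h1] P Q by simp
  have 1: "tau \<cdot> \<Psi> = (tau \<cdot> \<Psi>) \<cdot> (T \<cdot> tau \<boxplus> S)" unfolding IS using Q by simp
  have 2: "(tau \<cdot> \<Psi>) \<cdot> (T \<cdot> tau \<boxplus> S) = tau \<cdot> ((\<Psi> \<cdot> T) \<cdot> tau) \<boxplus> tau \<cdot> (\<Psi> \<cdot> S)"
    using Q St by (simp add: comp_addr assoc)
  have 3: "tau \<cdot> ((\<Psi> \<cdot> T) \<cdot> tau) = \<Phi> \<cdot> tau \<boxplus> Z (n \<odot> u) (u \<odot> n)"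
    using P Q by (simp add: h1' comp_addl comp_addr assoc tT[THEN tailJ] tc[THEN tailJ])
  have 4: "tau \<cdot> (\<Psi> \<cdot> S) = msum C (n \<odot> u) (u \<odot> n) (\<lambda>r. tau \<cdot> (cx (Suc r) \<cdot> f r)) K"
  proof -
    have "tau \<cdot> (\<Psi> \<cdot> S) = msum C (n \<odot> u) (u \<odot> n) (\<lambda>r. tau \<cdot> (\<Psi> \<cdot> (cx r \<cdot> f r))) K"
      unfolding S_def using Q ft by (subst msum_compr, simp, simp, simp, subst msum_compr) simp_all
    also have "\<dots> = msum C (n \<odot> u) (u \<odot> n) (\<lambda>r. tau \<cdot> (cx (Suc r) \<cdot> f r)) K"
    proof (rule msum_cong, intro allI impI)
      fix r assume r: "r < K"
      have "\<Psi> \<cdot> (cx r \<cdot> f r) = (\<Psi> \<cdot> cx r) \<cdot> f r" using ft r Q by (simp add: assoc)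
      then show "tau \<cdot> (\<Psi> \<cdot> (cx r \<cdot> f r)) = tau \<cdot> (cx (Suc r) \<cdot> f r)" by (simp add: h3)
    qed
    finally show ?thesis .
  qed
  have ms: "msum C (n \<odot> u) (u \<odot> n) (\<lambda>r. tau \<cdot> (cx (Suc r) \<cdot> f r)) K = tau \<cdot> (cx K \<cdot> f (K - 1))"
  proof (subst msum_last)
    show "0 < K" by (rule K0)
    show "\<forall>r<K - 1. tau \<cdot> (cx (Suc r) \<cdot> f r) = Z (n \<odot> u) (u \<odot> n)"
    proof (intro allI impI)
      fix r assume r: "r < K - 1"
      have "tau \<cdot> cx (Suc r) = Z U (u \<odot> n)" using inv_neg(3)[OF lev] r K_def by auto
      then show "tau \<cdot> (cx (Suc r) \<cdot> f r) = Z (n \<odot> u) (u \<odot> n)"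
        using spec[OF ft, of r] r by (simp add: assoc[symmetric])
    qed
    show "wt (tau \<cdot> (cx (Suc (K - 1)) \<cdot> f (K - 1)))" "dom (tau \<cdot> (cx (Suc (K - 1)) \<cdot> f (K - 1))) = n \<odot> u"
        "cod (tau \<cdot> (cx (Suc (K - 1)) \<cdot> f (K - 1))) = u \<odot> n" using spec[OF ft, of "K - 1"] K0 by auto
    show "tau \<cdot> (cx (Suc (K - 1)) \<cdot> f (K - 1)) = tau \<cdot> (cx K \<cdot> f (K - 1))" using K0 by simp
  qed
  have fK: "wt (f (K - 1))" "dom (f (K - 1)) = n \<odot> u" "cod (f (K - 1)) = U" using ft K0 by auto
  have CD: "CC \<cdot> DD = tau \<cdot> (cx K \<cdot> f (K - 1))"
    unfolding CC_neg[OF lev] DD_neg[OF lev] K_def[symmetric] using fK by (simp add: assoc)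
  have 5: "tau \<cdot> \<Psi> = \<Phi> \<cdot> tau \<boxplus> CC \<cdot> DD"
    using 1 2 3 4 ms CD P by simp
  show ?thesis using eq_add_ng[OF _ _ _ _ 5] P fK by (simp add: CD)
qed


lemma CD_wt: "wt (CC \<cdot> DD)" "dom (CC \<cdot> DD) = n \<odot> u" "cod (CC \<cdot> DD) = u \<odot> n"
   "wt CC" "dom CC = U" "cod CC = u \<odot> n" "wt DD" "dom DD = n \<odot> u" "cod DD = U"
proof -
  have "wt CC \<and> dom CC = U \<and> cod CC = u \<odot> n"
  proof (cases "0 < lev")
    case True then show ?thesis using e_wt[of "nat lev - 1"] by (simp add: CC_pos)
  next
    case False then show ?thesis by (simp add: heis_c'_def)
  qed
  moreover have "wt DD \<and> dom DD = n \<odot> u \<and> cod DD = U"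
  proof (cases "0 \<le> lev")
    case True then show ?thesis by (simp add: DD_pos)
  next
    case False then show ?thesis using f_wt[of "nat (- lev) - 1"] by (simp add: DD_neg)
  qed
  ultimately show "wt (CC \<cdot> DD)" "dom (CC \<cdot> DD) = n \<odot> u" "cod (CC \<cdot> DD) = u \<odot> n"
   "wt CC" "dom CC = U" "cod CC = u \<odot> n" "wt DD" "dom DD = n \<odot> u" "cod DD = U" by simp_all
qed

lemma abs_pos_b:
  assumes lev: "0 \<le> lev"
  and P: "wt \<Phi>" "dom \<Phi> = u \<odot> n" "cod \<Phi> = u \<odot> n" and Q: "wt \<Psi>" "dom \<Psi> = n \<odot> u" "cod \<Psi> = n \<odot> u"
  and h1: "T \<cdot> \<Phi> = \<Psi> \<cdot> T \<boxplus> ng (c \<cdot> d)"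
  and h2: "\<And>r. dx r \<cdot> \<Phi> = dx (Suc r)"
  shows "DD \<cdot> \<Psi> = dx (Suc (nat lev)) \<cdot> tau \<boxplus> dx (nat lev) \<cdot> (CC \<cdot> DD)"
proof -
  have a: "\<Phi> \<cdot> tau = tau \<cdot> \<Psi> \<boxplus> ng (CC \<cdot> DD)" by (rule abs_pos_a[OF lev P Q h1 h2])
  have a': "tau \<cdot> \<Psi> = \<Phi> \<cdot> tau \<boxplus> CC \<cdot> DD"
    using eq_add_ng[OF _ _ _ _ a] Q CD_wt by simp
  have "DD \<cdot> \<Psi> = dx (nat lev) \<cdot> (tau \<cdot> \<Psi>)" using Q by (simp add: DD_pos[OF lev] assoc)
  also have "\<dots> = (dx (nat lev) \<cdot> \<Phi>) \<cdot> tau \<boxplus> dx (nat lev) \<cdot> (CC \<cdot> DD)"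
    unfolding a' using P CD_wt by (simp add: comp_addr assoc)
  finally show ?thesis by (simp add: h2)
qed

lemma abs_pos_c:
  assumes lev: "0 \<le> lev"
  and P: "wt \<Phi>" "dom \<Phi> = u \<odot> n" "cod \<Phi> = u \<odot> n" and Q: "wt \<Psi>" "dom \<Psi> = n \<odot> u" "cod \<Psi> = n \<odot> u"
  and h1: "T \<cdot> \<Phi> = \<Psi> \<cdot> T \<boxplus> ng (c \<cdot> d)"
  and h2: "\<And>r. dx r \<cdot> \<Phi> = dx (Suc r)"
  and h3: "\<And>r. \<Psi> \<cdot> cx r = cx (Suc r)"
  shows "\<Phi> \<cdot> CC = (if lev = 0 then tau \<cdot> cx 1 \<boxplus> ng (CC \<cdot> (DD \<cdot> c))
      else ng (ng (tau \<cdot> (c \<cdot> (d \<cdot> e (nat lev - 1)))) \<boxplus>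
          msum C U (u \<odot> n) (\<lambda>r. e r \<cdot> (dx (Suc r) \<cdot> e (nat lev - 1))) (nat lev)))"
proof (cases "lev = 0")
  case True
  have a: "\<Phi> \<cdot> tau = tau \<cdot> \<Psi> \<boxplus> ng (CC \<cdot> DD)" by (rule abs_pos_a[OF lev P Q h1 h2])
  have Pc: "\<Psi> \<cdot> c = cx 1" using h3[of 0] by simp
  have "\<Phi> \<cdot> CC = (\<Phi> \<cdot> tau) \<cdot> c" using P by (simp add: CC_zero[OF True] assoc)
  also have "\<dots> = tau \<cdot> cx 1 \<boxplus> ng (CC \<cdot> (DD \<cdot> c))"
    unfolding a using Q CD_wt by (simp add: comp_addl assoc Pc del: One_nat_def)
  finally show ?thesis using True by simp
next
  case False
  then have l0: "0 < lev" using lev by simp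
  define K where "K = nat lev"
  have K0: "0 < K" using l0 K_def by simp
  define m where "m = K - 1"
  have et: "\<forall>r<K. wt (e r) \<and> dom (e r) = U \<and> cod (e r) = u \<odot> n" using e_wt lev K_def by blast
  have eK: "wt (e m)" "dom (e m) = U" "cod (e m) = u \<odot> n" using et K0 m_def by auto
  have te: "T \<cdot> e m = Z U (n \<odot> u)" using inv_pos(3)[OF lev] K0 K_def m_def by auto
  define S where "S = msum C (u \<odot> n) (u \<odot> n) (\<lambda>r. e r \<cdot> dx r) K"
  have St: "wt S" "dom S = u \<odot> n" "cod S = u \<odot> n" using msum_wt[of K "\<lambda>r. e r \<cdot> dx r"] et unfolding S_def by simp_all
  have IS: "tau \<cdot> T \<boxplus> S = I (u \<odot> n)" unfolding S_def K_def by (rule inv_pos(1)[OF lev])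
  have 1: "\<Phi> \<cdot> e m = (tau \<cdot> T \<boxplus> S) \<cdot> (\<Phi> \<cdot> e m)" unfolding IS using P eK by simp
  have 2: "(tau \<cdot> T \<boxplus> S) \<cdot> (\<Phi> \<cdot> e m) = tau \<cdot> ((T \<cdot> \<Phi>) \<cdot> e m) \<boxplus> S \<cdot> (\<Phi> \<cdot> e m)"
    using P St eK by (simp add: comp_addl assoc)
  have 3: "tau \<cdot> ((T \<cdot> \<Phi>) \<cdot> e m) = ng (tau \<cdot> (c \<cdot> (d \<cdot> e m)))"
    using P Q eK by (simp add: h1 comp_addl comp_addr assoc te)
  have 4: "S \<cdot> (\<Phi> \<cdot> e m) = msum C U (u \<odot> n) (\<lambda>r. e r \<cdot> (dx (Suc r) \<cdot> e m)) K"
  proof -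
    have "S \<cdot> (\<Phi> \<cdot> e m) = msum C U (u \<odot> n) (\<lambda>r. (e r \<cdot> dx r) \<cdot> (\<Phi> \<cdot> e m)) K"
      unfolding S_def using P et eK by (subst msum_compl) simp_all
    also have "\<dots> = msum C U (u \<odot> n) (\<lambda>r. e r \<cdot> (dx (Suc r) \<cdot> e m)) K"
    proof (rule msum_cong, intro allI impI)
      fix r assume r: "r < K"
      have "(e r \<cdot> dx r) \<cdot> (\<Phi> \<cdot> e m) = e r \<cdot> ((dx r \<cdot> \<Phi>) \<cdot> e m)" using et r P eK by (simp add: assoc)
      then show "(e r \<cdot> dx r) \<cdot> (\<Phi> \<cdot> e m) = e r \<cdot> (dx (Suc r) \<cdot> e m)" by (simp add: h2)
    qed
    finally show ?thesis .
  qed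
  have "\<Phi> \<cdot> CC = ng (\<Phi> \<cdot> e m)" using P eK by (simp add: CC_pos[OF l0] K_def m_def)
  also have "\<dots> = ng (ng (tau \<cdot> (c \<cdot> (d \<cdot> e m))) \<boxplus> msum C U (u \<odot> n) (\<lambda>r. e r \<cdot> (dx (Suc r) \<cdot> e m)) K)"
    using 1 2 3 4 by simp
  finally show ?thesis using False K_def m_def by simp
qed


lemma abs_neg_b:
  assumes lev: "lev < 0"
  and P: "wt \<Phi>" "dom \<Phi> = u \<odot> n" "cod \<Phi> = u \<odot> n" and Q: "wt \<Psi>" "dom \<Psi> = n \<odot> u" "cod \<Psi> = n \<odot> u"
  and h1: "T \<cdot> \<Phi> = \<Psi> \<cdot> T \<boxplus> ng (c \<cdot> d)"
  and h3: "\<And>r. \<Psi> \<cdot> cx r = cx (Suc r)"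
  shows "DD \<cdot> \<Psi> = f (nat (- lev) - 1) \<cdot> (c \<cdot> (d \<cdot> tau)) \<boxplus>
     msum C (n \<odot> u) U (\<lambda>r. f (nat (- lev) - 1) \<cdot> (cx (Suc r) \<cdot> f r)) (nat (- lev))"
proof -
  define K where "K = nat (- lev)"
  have K0: "0 < K" using lev K_def by simp
  define m where "m = K - 1"
  have ft: "\<forall>r<K. wt (f r) \<and> dom (f r) = n \<odot> u \<and> cod (f r) = U" using f_wt lev K_def by blast
  have fm: "wt (f m)" "dom (f m) = n \<odot> u" "cod (f m) = U" using ft K0 m_def by auto
  have fT: "f m \<cdot> T = Z (u \<odot> n) U" using inv_neg(4)[OF lev] K0 K_def m_def by auto
  define S where "S = msum C (n \<odot> u) (n \<odot> u) (\<lambda>r. cx r \<cdot> f r) K"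
  have St: "wt S" "dom S = n \<odot> u" "cod S = n \<odot> u" using msum_wt[of K "\<lambda>r. cx r \<cdot> f r"] ft unfolding S_def by simp_all
  have IS: "T \<cdot> tau \<boxplus> S = I (n \<odot> u)" unfolding S_def K_def by (rule inv_neg(1)[OF lev])
  have h1': "\<Psi> \<cdot> T = T \<cdot> \<Phi> \<boxplus> c \<cdot> d"
    using eq_add_ng[OF _ _ _ _ h1] P Q by simp
  have 1: "f m \<cdot> \<Psi> = (f m \<cdot> \<Psi>) \<cdot> (T \<cdot> tau \<boxplus> S)" unfolding IS using Q fm by simp
  have 2: "(f m \<cdot> \<Psi>) \<cdot> (T \<cdot> tau \<boxplus> S) = f m \<cdot> ((\<Psi> \<cdot> T) \<cdot> tau) \<boxplus> f m \<cdot> (\<Psi> \<cdot> S)"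
    using Q St fm by (simp add: comp_addr assoc)
  have 3: "f m \<cdot> ((\<Psi> \<cdot> T) \<cdot> tau) = f m \<cdot> (c \<cdot> (d \<cdot> tau))"
    using P Q fm by (simp add: h1' comp_addl comp_addr assoc fT[THEN tailJ])
  have 4: "f m \<cdot> (\<Psi> \<cdot> S) = msum C (n \<odot> u) U (\<lambda>r. f m \<cdot> (cx (Suc r) \<cdot> f r)) K"
  proof -
    have "f m \<cdot> (\<Psi> \<cdot> S) = msum C (n \<odot> u) U (\<lambda>r. f m \<cdot> (\<Psi> \<cdot> (cx r \<cdot> f r))) K"
      unfolding S_def using Q ft fm by (subst msum_compr, simp, simp, simp, subst msum_compr) simp_all
    also have "\<dots> = msum C (n \<odot> u) U (\<lambda>r. f m \<cdot> (cx (Suc r) \<cdot> f r)) K"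
    proof (rule msum_cong, intro allI impI)
      fix r assume r: "r < K"
      have "\<Psi> \<cdot> (cx r \<cdot> f r) = (\<Psi> \<cdot> cx r) \<cdot> f r" using ft r Q by (simp add: assoc)
      then show "f m \<cdot> (\<Psi> \<cdot> (cx r \<cdot> f r)) = f m \<cdot> (cx (Suc r) \<cdot> f r)" by (simp add: h3)
    qed
    finally show ?thesis .
  qed
  have "DD \<cdot> \<Psi> = f m \<cdot> \<Psi>" by (simp add: DD_neg[OF lev] K_def m_def)
  also have "\<dots> = f m \<cdot> (c \<cdot> (d \<cdot> tau)) \<boxplus> msum C (n \<odot> u) U (\<lambda>r. f m \<cdot> (cx (Suc r) \<cdot> f r)) K"
    using 1 2 3 4 by simp
  finally show ?thesis by (simp add: K_def m_def)
qed

lemma abs_neg_c: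
  assumes lev: "lev < 0"
  and P: "wt \<Phi>" "dom \<Phi> = u \<odot> n" "cod \<Phi> = u \<odot> n" and Q: "wt \<Psi>" "dom \<Psi> = n \<odot> u" "cod \<Psi> = n \<odot> u"
  and h1: "T \<cdot> \<Phi> = \<Psi> \<cdot> T \<boxplus> ng (c \<cdot> d)"
  and h3: "\<And>r. \<Psi> \<cdot> cx r = cx (Suc r)"
  shows "\<Phi> \<cdot> CC = tau \<cdot> cx (Suc (nat (- lev))) \<boxplus> ng (CC \<cdot> (DD \<cdot> cx (nat (- lev))))"
proof -
  have a: "\<Phi> \<cdot> tau = tau \<cdot> \<Psi> \<boxplus> ng (CC \<cdot> DD)" by (rule abs_neg_a[OF lev P Q h1 h3])
  have "\<Phi> \<cdot> CC = (\<Phi> \<cdot> tau) \<cdot> cx (nat (- lev))" using P by (simp add: CC_neg[OF lev] assoc)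
  also have "\<dots> = tau \<cdot> (\<Psi> \<cdot> cx (nat (- lev))) \<boxplus> ng (CC \<cdot> (DD \<cdot> cx (nat (- lev))))"
    unfolding a using Q CD_wt by (simp add: comp_addl assoc)
  finally show ?thesis by (simp add: h3)
qed


lemma main:
  "let c' = heis_c' C lev up dn x c tau e; d' = heis_d' C lev up dn x d tau f;
             x' = heis_x' C dn x c d; I = ident C in
         msub C (comp C tau (tens C x' (I up))) (comp C (tens C (I up) x') tau) = comp C c' d' \<and>
         msub C (comp C tau (tens C (I dn) x)) (comp C (tens C x (I dn)) tau) = comp C c' d' \<and>
         comp C d' (tens C (I dn) x) = comp C d' (tens C x' (I up)) \<and>
         comp C (tens C x (I dn)) c' = comp C (tens C (I up) x') c'"
proof -
  have PA: "wt (W U x n)" "dom (W U x n) = u \<odot> n" "cod (W U x n) = u \<odot> n" by simp_all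
  have QA: "wt (W n x U)" "dom (W n x U) = n \<odot> u" "cod (W n x U) = n \<odot> u" by simp_all
  have PB: "wt (W u X' U)" "dom (W u X' U) = u \<odot> n" "cod (W u X' U) = u \<odot> n" by simp_all
  have QB: "wt (W U X' u)" "dom (W U X' u) = n \<odot> u" "cod (W U X' u) = n \<odot> u" by simp_all
  have rA: "W U x n \<cdot> tau = tau \<cdot> W n x U \<boxplus> ng (CC \<cdot> DD)"
  proof (cases "0 \<le> lev")
    case True then show ?thesis using abs_pos_a[OF True PA QA D1 D3] by simp
  next
    case False then show ?thesis using abs_neg_a[of "W U x n" "W n x U"] PA QA D1 D5 by simp
  qed
  have rB: "W u X' U \<cdot> tau = tau \<cdot> W U X' u \<boxplus> ng (CC \<cdot> DD)"
  proof (cases "0 \<le> lev")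
    case True then show ?thesis using abs_pos_a[OF True PB QB D2 D4] by simp
  next
    case False then show ?thesis using abs_neg_a[of "W u X' U" "W U X' u"] PB QB D2 D6 by simp
  qed
  have r3: "DD \<cdot> W n x U = DD \<cdot> W U X' u"
  proof (cases "0 \<le> lev")
    case True then show ?thesis using abs_pos_b[OF True PA QA D1 D3] abs_pos_b[OF True PB QB D2 D4] by simp
  next
    case False then show ?thesis using abs_neg_b[of "W U x n" "W n x U"] abs_neg_b[of "W u X' U" "W U X' u"]
      PA QA D1 D5 PB QB D2 D6 by simp
  qed
  have r4: "W U x n \<cdot> CC = W u X' U \<cdot> CC"
  proof (cases "0 \<le> lev")
    case True then show ?thesis using abs_pos_c[OF True PA QA D1 D3 D5] abs_pos_c[OF True PB QB D2 D4 D6] by simp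
  next
    case False then show ?thesis using abs_neg_c[of "W U x n" "W n x U"] abs_neg_c[of "W u X' U" "W U X' u"]
      PA QA D1 D5 PB QB D2 D6 by simp
  qed
  have m1: "msub C (tau \<cdot> W U X' u) (W u X' U \<cdot> tau) = CC \<cdot> DD"
    unfolding rB using QB CD_wt by (intro msub_self_addng) simp_all
  have m2: "msub C (tau \<cdot> W n x U) (W U x n \<cdot> tau) = CC \<cdot> DD"
    unfolding rA using QA CD_wt by (intro msub_self_addng) simp_all
  show ?thesis unfolding Let_def using m1 m2 r3 r4 by simp
qed

end

theorem lemma2p2:
  fixes C :: "('o,'m,'k::comm_ring_1) slmcat"
    and lev :: int and up dn :: 'o and x s c d tau :: 'm and e f :: "nat \<Rightarrow> 'm"
  assumes "slm_cat C"
    and "heis_rels C lev up dn x s c d tau e f"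
  shows "let c' = heis_c' C lev up dn x c tau e; d' = heis_d' C lev up dn x d tau f;
             x' = heis_x' C dn x c d; I = ident C in
         msub C (comp C tau (tens C x' (I up))) (comp C (tens C (I up) x') tau) = comp C c' d' \<and>
         msub C (comp C tau (tens C (I dn) x)) (comp C (tens C x (I dn)) tau) = comp C c' d' \<and>
         comp C d' (tens C (I dn) x) = comp C d' (tens C x' (I up)) \<and>
         comp C (tens C x (I dn)) c' = comp C (tens C (I up) x') c'"
proof -
  interpret heis C lev up dn x s c d tau e f
    using assms by (unfold_locales; simp)
  show ?thesis by (rule main)
qed

end
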